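(* Let $\mathbf{D}$ be a 2-category with an enhanced factorization system $(\mathcal{E},\mathcal{M})$ and let $\mathbf{C}$ be a small 2-category. Suppose that $(\mathcal{E},\mathcal{M})$ separates parallel pairs, every 1-cell in $\mathcal{E}$ is a 2-epimorphism, and every 1-cell in $\mathcal{M}$ is a 2-monomorphism. Then $(\mathcal{E}^{\mathbf{C}},\mathcal{M}^{\mathbf{C}})$ is an enhanced factorization system on $\mathbf{D}^{\mathbf{C}}$.
   Context: For a 2-category $\mathbf{A}$, an enhanced factorization system on $\mathbf{A}$ is a pair $(\mathcal{E},\mathcal{M})$ of classes of 1-cells of $\mathbf{A}$, each containing all isomorphisms, such that: (i) every 1-cell $\alpha$ factors (not necessarily uniquely) as $\alpha=\mu\circ\varepsilon$ with $\varepsilon\in\mathcal{E}$, $\mu\in\mathcal{M}$; (ii) given $\varepsilon\colon F\to F'$ in $\mathcal{E}$, $\mu\colon G\to G'$ in $\mathcal{M}$, 1-cells $\alpha\colon F\to G$, $\alpha'\colon F'\to G'$ and an invertible 2-cell $\Psi\colon \alpha'\varepsilon\Rightarrow\mu\alpha$, there is a unique pair $(\delta,\widetilde\Psi)$ with $\delta\colon F'\to G$ a 1-cell and $\widetilde\Psi\colon\alpha'\Rightarrow\mu\delta$ an invertible 2-cell such that $\delta\varepsilon=\alpha$ and the whiskering $\widetilde\Psi\varepsilon=\Psi$; moreover if $\Psi$ is an identity then $\mu\delta=\alpha'$ and $\widetilde\Psi$ is an identity; (iii) given $\varepsilon\colon F\to F'$ in $\mathcal{E}$, $\mu\colon G\to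 G'$ in $\mathcal{M}$, parallel 1-cells $\alpha_1,\alpha_2\colon F\to G$ and $\alpha_1',\alpha_2'\colon F'\to G'$ with $\alpha_i'\varepsilon=\mu\alpha_i$ ($i=1,2$), and 2-cells $\Phi\colon\alpha_1\Rightarrow\alpha_2$, $\Phi'\colon\alpha_1'\Rightarrow\alpha_2'$ with $\mu\Phi=\Phi'\varepsilon$, let $\delta_i\colon F'\to G$ be the unique 1-cells with $\delta_i\varepsilon=\alpha_i$ and $\mu\delta_i=\alpha_i'$ (from (ii) with identity 2-cell); then there is a unique 2-cell $\Delta\colon\delta_1\Rightarrow\delta_2$ with $\Delta\varepsilon=\Phi$ and $\mu\Delta=\Phi'$. $(\mathcal{E},\mathcal{M})$ separates parallel pairs if whenever $\alpha,\beta\colon F\to G$ are parallel 1-cells for which there exist $\varepsilon\in\mathcal{E}$ with target $F$ and $\alpha\varepsilon=\beta\varepsilon$, and $\mu\in\mathcal{M}$ with source $G$ and $\mu\alpha=\mu\beta$, then $\alpha=\beta$. A 1-cell $\varepsilon\colon F\to G$ is a 2-epimorphism if for all 1-cells $\beta,\beta'\colon G\to H$ and 2-cells $\Psi,\Psi'\colon\beta\Rightarrow\beta'$, $\Psi\varepsilon=\Psi'\varepsilon$ implies $\Psi=\Psi'$. A 1-cell $\mu\colon G\to H$ is a 2-monomorphism if for all 1-cells $\beta,\beta'\colon F\to G$ and 2-cells $\Psi,\Psi'\colon\beta\Rightarrow\beta'$, $\mu\Psi=\mu\Psi'$ implies $\Psi=\Psi'$. $\mathbf{D}^{\mathbf{C}}$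 is the 2-category of 2-functors $\mathbf{C}\to\mathbf{D}$, 2-natural transformations, and modifications. $\mathcal{E}^{\mathbf{C}}$ (resp. $\mathcal{M}^{\mathbf{C}}$) is the class of 2-natural transformations all of whose components lie in $\mathcal{E}$ (resp. $\mathcal{M}$). *)

theory Defs
  imports Main
begin

text \<open>Comp g f is g after f; VComp psi phi is psi after phi (vertical);
  HComp psi phi is the horizontal composite psi * phi (phi first, then psi).\<close>

record ('o, 'a, 'c) twocat =
  Obj   :: "'o set"
  Arr   :: "'a set"
  Cell  :: "'c set"
  Dom   :: "'a \<Rightarrow> 'o"
  Cod   :: "'a \<Rightarrow> 'o"
  Id1   :: "'o \<Rightarrow> 'a"
  Comp  :: "'a \<Rightarrow> 'a \<Rightarrow> 'a"
  Src   :: "'c \<Rightarrow> 'a"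
  Tgt   :: "'c \<Rightarrow> 'a"
  Id2   :: "'a \<Rightarrow> 'c"
  VComp :: "'c \<Rightarrow> 'c \<Rightarrow> 'c"
  HComp :: "'c \<Rightarrow> 'c \<Rightarrow> 'c"

definition hom1 :: "('o,'a,'c,'e) twocat_scheme \<Rightarrow> 'a \<Rightarrow> 'o \<Rightarrow> 'o \<Rightarrow> bool" where
  "hom1 A f X Y \<longleftrightarrow> f \<in> Arr A \<and> Dom A f = X \<and> Cod A f = Y"

definition hom2 :: "('o,'a,'c,'e) twocat_scheme \<Rightarrow> 'c \<Rightarrow> 'a \<Rightarrow> 'a \<Rightarrow> bool" where
  "hom2 A \<phi> f g \<longleftrightarrow> \<phi> \<in> Cell A \<and> Src A \<phi> = f \<and> Tgt A \<phi> = g"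

definition two_category :: "('o,'a,'c,'e) twocat_scheme \<Rightarrow> bool" where
  "two_category A \<longleftrightarrow>
    \<comment> \<open>underlying category of 0- and 1-cells\<close>
    (\<forall>f\<in>Arr A. Dom A f \<in> Obj A \<and> Cod A f \<in> Obj A) \<and>
    (\<forall>X\<in>Obj A. hom1 A (Id1 A X) X X) \<and>
    (\<forall>f\<in>Arr A. \<forall>g\<in>Arr A. Cod A f = Dom A g \<longrightarrow> hom1 A (Comp A g f) (Dom A f) (Cod A g)) \<and>
    (\<forall>f\<in>Arr A. \<forall>g\<in>Arr A. \<forall>h\<in>Arr A. Cod A f = Dom A g \<longrightarrow> Cod A g = Dom A h \<longrightarrow>
        Comp A h (Comp A g f) = Comp A (Comp A h g) f) \<and>
    (\<forall>f\<in>Arr A. Comp A f (Id1 A (Dom A f)) = f \<and> Comp A (Id1 A (Cod A f)) f = f) \<and>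
    \<comment> \<open>2-cells are between parallel 1-cells\<close>
    (\<forall>\<phi>\<in>Cell A. Src A \<phi> \<in> Arr A \<and> Tgt A \<phi> \<in> Arr A \<and>
        Dom A (Src A \<phi>) = Dom A (Tgt A \<phi>) \<and> Cod A (Src A \<phi>) = Cod A (Tgt A \<phi>)) \<and>
    \<comment> \<open>vertical composition: a category structure on 2-cells\<close>
    (\<forall>f\<in>Arr A. hom2 A (Id2 A f) f f) \<and>
    (\<forall>\<phi>\<in>Cell A. \<forall>\<psi>\<in>Cell A. Tgt A \<phi> = Src A \<psi> \<longrightarrow>
        hom2 A (VComp A \<psi> \<phi>) (Src A \<phi>) (Tgt A \<psi>)) \<and>
    (\<forall>\<phi>\<in>Cell A. \<forall>\<psi>\<in>Cell A. \<forall>\<chi>\<in>Cell A. Tgt A \<phi> = Src A \<psi> \<longrightarrow> Tgt A \<psi> = Src A \<chi> \<longrightarrow>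
        VComp A \<chi> (VComp A \<psi> \<phi>) = VComp A (VComp A \<chi> \<psi>) \<phi>) \<and>
    (\<forall>\<phi>\<in>Cell A. VComp A \<phi> (Id2 A (Src A \<phi>)) = \<phi> \<and> VComp A (Id2 A (Tgt A \<phi>)) \<phi> = \<phi>) \<and>
    \<comment> \<open>horizontal composition\<close>
    (\<forall>\<phi>\<in>Cell A. \<forall>\<psi>\<in>Cell A. Cod A (Src A \<phi>) = Dom A (Src A \<psi>) \<longrightarrow>
        hom2 A (HComp A \<psi> \<phi>) (Comp A (Src A \<psi>) (Src A \<phi>)) (Comp A (Tgt A \<psi>) (Tgt A \<phi>))) \<and>
    (\<forall>\<phi>\<in>Cell A. \<forall>\<psi>\<in>Cell A. \<forall>\<chi>\<in>Cell A.
        Cod A (Src A \<phi>) = Dom A (Src A \<psi>) \<longrightarrow> Cod A (Src A \<psi>) = Dom A (Src A \<chi>) \<longrightarrow>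
        HComp A \<chi> (HComp A \<psi> \<phi>) = HComp A (HComp A \<chi> \<psi>) \<phi>) \<and>
    (\<forall>\<phi>\<in>Cell A. HComp A \<phi> (Id2 A (Id1 A (Dom A (Src A \<phi>)))) = \<phi> \<and>
                 HComp A (Id2 A (Id1 A (Cod A (Src A \<phi>)))) \<phi> = \<phi>) \<and>
    (\<forall>f\<in>Arr A. \<forall>g\<in>Arr A. Cod A f = Dom A g \<longrightarrow>
        HComp A (Id2 A g) (Id2 A f) = Id2 A (Comp A g f)) \<and>
    \<comment> \<open>interchange law\<close>
    (\<forall>\<phi>\<in>Cell A. \<forall>\<phi>'\<in>Cell A. \<forall>\<psi>\<in>Cell A. \<forall>\<psi>'\<in>Cell A.
        Tgt A \<phi> = Src A \<phi>' \<longrightarrow> Tgt A \<psi> = Src A \<psi>' \<longrightarrow> Cod A (Src A \<phi>) = Dom A (Src A \<psi>) \<longrightarrow>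
        HComp A (VComp A \<psi>' \<psi>) (VComp A \<phi>' \<phi>) = VComp A (HComp A \<psi>' \<phi>') (HComp A \<psi> \<phi>))"

definition whiskR :: "('o,'a,'c,'e) twocat_scheme \<Rightarrow> 'c \<Rightarrow> 'a \<Rightarrow> 'c" where
  "whiskR A \<Psi> f = HComp A \<Psi> (Id2 A f)"

definition whiskL :: "('o,'a,'c,'e) twocat_scheme \<Rightarrow> 'a \<Rightarrow> 'c \<Rightarrow> 'c" where
  "whiskL A f \<Psi> = HComp A (Id2 A f) \<Psi>"

definition iso1 :: "('o,'a,'c,'e) twocat_scheme \<Rightarrow> 'a \<Rightarrow> bool" where
  "iso1 A f \<longleftrightarrow> f \<in> Arr A \<and> (\<exists>g. hom1 A g (Cod A f) (Dom A f) \<and>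
      Comp A g f = Id1 A (Dom A f) \<and> Comp A f g = Id1 A (Cod A f))"

definition iso2 :: "('o,'a,'c,'e) twocat_scheme \<Rightarrow> 'c \<Rightarrow> bool" where
  "iso2 A \<phi> \<longleftrightarrow> \<phi> \<in> Cell A \<and> (\<exists>\<psi>. hom2 A \<psi> (Tgt A \<phi>) (Src A \<phi>) \<and>
      VComp A \<psi> \<phi> = Id2 A (Src A \<phi>) \<and> VComp A \<phi> \<psi> = Id2 A (Tgt A \<phi>))"

definition enhanced_fs :: "('o,'a,'c,'e) twocat_scheme \<Rightarrow> 'a set \<Rightarrow> 'a set \<Rightarrow> bool" where
  "enhanced_fs A E M \<longleftrightarrow>
    E \<subseteq> Arr A \<and> M \<subseteq> Arr A \<and>
    {f. iso1 A f} \<subseteq> E \<and> {f. iso1 A f} \<subseteq> M \<and>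
    \<comment> \<open>(i)\<close>
    (\<forall>\<alpha>\<in>Arr A. \<exists>\<epsilon>\<in>E. \<exists>\<mu>\<in>M. Cod A \<epsilon> = Dom A \<mu> \<and> \<alpha> = Comp A \<mu> \<epsilon>) \<and>
    \<comment> \<open>(ii)\<close>
    (\<forall>\<epsilon>\<in>E. \<forall>\<mu>\<in>M. \<forall>\<alpha> \<alpha>' \<Psi>.
       let F = Dom A \<epsilon>; F' = Cod A \<epsilon>; G = Dom A \<mu>; G' = Cod A \<mu> in
       hom1 A \<alpha> F G \<longrightarrow> hom1 A \<alpha>' F' G' \<longrightarrow>
       hom2 A \<Psi> (Comp A \<alpha>' \<epsilon>) (Comp A \<mu> \<alpha>) \<longrightarrow> iso2 A \<Psi> \<longrightarrow>
       (\<exists>!(\<delta>, \<Psi>'). hom1 A \<delta> F' G \<and> hom2 A \<Psi>' \<alpha>' (Comp A \<mu> \<delta>) \<and> iso2 A \<Psi>' \<and>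
            Comp A \<delta> \<epsilon> = \<alpha> \<and> whiskR A \<Psi>' \<epsilon> = \<Psi>) \<and>
       (\<forall>\<delta> \<Psi>'. hom1 A \<delta> F' G \<and> hom2 A \<Psi>' \<alpha>' (Comp A \<mu> \<delta>) \<and> iso2 A \<Psi>' \<and>
            Comp A \<delta> \<epsilon> = \<alpha> \<and> whiskR A \<Psi>' \<epsilon> = \<Psi> \<longrightarrow>
            \<Psi> = Id2 A (Comp A \<alpha>' \<epsilon>) \<longrightarrow> Comp A \<mu> \<delta> = \<alpha>' \<and> \<Psi>' = Id2 A \<alpha>')) \<and>
    \<comment> \<open>(iii)\<close>
    (\<forall>\<epsilon>\<in>E. \<forall>\<mu>\<in>M. \<forall>\<alpha>1 \<alpha>2 \<alpha>1' \<alpha>2' \<Phi> \<Phi>' \<delta>1 \<delta>2.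
       let F = Dom A \<epsilon>; F' = Cod A \<epsilon>; G = Dom A \<mu>; G' = Cod A \<mu> in
       hom1 A \<alpha>1 F G \<longrightarrow> hom1 A \<alpha>2 F G \<longrightarrow> hom1 A \<alpha>1' F' G' \<longrightarrow> hom1 A \<alpha>2' F' G' \<longrightarrow>
       Comp A \<alpha>1' \<epsilon> = Comp A \<mu> \<alpha>1 \<longrightarrow> Comp A \<alpha>2' \<epsilon> = Comp A \<mu> \<alpha>2 \<longrightarrow>
       hom2 A \<Phi> \<alpha>1 \<alpha>2 \<longrightarrow> hom2 A \<Phi>' \<alpha>1' \<alpha>2' \<longrightarrow> whiskL A \<mu> \<Phi> = whiskR A \<Phi>' \<epsilon> \<longrightarrow>
       hom1 A \<delta>1 F' G \<longrightarrow> Comp A \<delta>1 \<epsilon> = \<alpha>1 \<longrightarrow> Comp A \<mu> \<delta>1 = \<alpha>1' \<longrightarrow>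
       hom1 A \<delta>2 F' G \<longrightarrow> Comp A \<delta>2 \<epsilon> = \<alpha>2 \<longrightarrow> Comp A \<mu> \<delta>2 = \<alpha>2' \<longrightarrow>
       (\<exists>!\<Delta>. hom2 A \<Delta> \<delta>1 \<delta>2 \<and> whiskR A \<Delta> \<epsilon> = \<Phi> \<and> whiskL A \<mu> \<Delta> = \<Phi>'))"

definition separates_parallel_pairs ::
  "('o,'a,'c,'e) twocat_scheme \<Rightarrow> 'a set \<Rightarrow> 'a set \<Rightarrow> bool" where
  "separates_parallel_pairs A E M \<longleftrightarrow>
    (\<forall>\<alpha> \<beta> F G. hom1 A \<alpha> F G \<longrightarrow> hom1 A \<beta> F G \<longrightarrow>
       (\<exists>\<epsilon>\<in>E. Cod A \<epsilon> = F \<and> Comp A \<alpha> \<epsilon> = Comp A \<beta> \<epsilon>) \<longrightarrow>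
       (\<exists>\<mu>\<in>M. Dom A \<mu> = G \<and> Comp A \<mu> \<alpha> = Comp A \<mu> \<beta>) \<longrightarrow> \<alpha> = \<beta>)"

definition two_epi :: "('o,'a,'c,'e) twocat_scheme \<Rightarrow> 'a \<Rightarrow> bool" where
  "two_epi A \<epsilon> \<longleftrightarrow> \<epsilon> \<in> Arr A \<and>
    (\<forall>\<beta> \<beta>' H \<Psi> \<Psi>'. hom1 A \<beta> (Cod A \<epsilon>) H \<longrightarrow> hom1 A \<beta>' (Cod A \<epsilon>) H \<longrightarrow>
       hom2 A \<Psi> \<beta> \<beta>' \<longrightarrow> hom2 A \<Psi>' \<beta> \<beta>' \<longrightarrow> whiskR A \<Psi> \<epsilon> = whiskR A \<Psi>' \<epsilon> \<longrightarrow> \<Psi> = \<Psi>')"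

definition two_mono :: "('o,'a,'c,'e) twocat_scheme \<Rightarrow> 'a \<Rightarrow> bool" where
  "two_mono A \<mu> \<longleftrightarrow> \<mu> \<in> Arr A \<and>
    (\<forall>\<beta> \<beta>' F \<Psi> \<Psi>'. hom1 A \<beta> F (Dom A \<mu>) \<longrightarrow> hom1 A \<beta>' F (Dom A \<mu>) \<longrightarrow>
       hom2 A \<Psi> \<beta> \<beta>' \<longrightarrow> hom2 A \<Psi>' \<beta> \<beta>' \<longrightarrow> whiskL A \<mu> \<Psi> = whiskL A \<mu> \<Psi>' \<longrightarrow> \<Psi> = \<Psi>')"

text \<open>2-functors, 2-natural transformations and modifications are represented
  extensionally: all component maps are undefined outside the carriers of C.\<close>

record ('o1, 'a1, 'c1, 'o2, 'a2, 'c2) tfun =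
  FO :: "'o1 \<Rightarrow> 'o2"
  FA :: "'a1 \<Rightarrow> 'a2"
  FC :: "'c1 \<Rightarrow> 'c2"

record ('o1, 'a1, 'c1, 'o2, 'a2, 'c2) tnat =
  NSrc :: "('o1, 'a1, 'c1, 'o2, 'a2, 'c2) tfun"
  NTgt :: "('o1, 'a1, 'c1, 'o2, 'a2, 'c2) tfun"
  NCmp :: "'o1 \<Rightarrow> 'a2"

record ('o1, 'a1, 'c1, 'o2, 'a2, 'c2) tmod =
  MSrc :: "('o1, 'a1, 'c1, 'o2, 'a2, 'c2) tnat"
  MTgt :: "('o1, 'a1, 'c1, 'o2, 'a2, 'c2) tnat"
  MCmp :: "'o1 \<Rightarrow> 'c2"

definition two_functor ::
  "('o1,'a1,'c1) twocat \<Rightarrow> ('o2,'a2,'c2) twocat \<Rightarrow> ('o1,'a1,'c1,'o2,'a2,'c2) tfun \<Rightarrow> bool" where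
  "two_functor C D F \<longleftrightarrow>
    (\<forall>X. X \<notin> Obj C \<longrightarrow> FO F X = undefined) \<and>
    (\<forall>f. f \<notin> Arr C \<longrightarrow> FA F f = undefined) \<and>
    (\<forall>\<phi>. \<phi> \<notin> Cell C \<longrightarrow> FC F \<phi> = undefined) \<and>
    (\<forall>X\<in>Obj C. FO F X \<in> Obj D) \<and>
    (\<forall>f\<in>Arr C. hom1 D (FA F f) (FO F (Dom C f)) (FO F (Cod C f))) \<and>
    (\<forall>X\<in>Obj C. FA F (Id1 C X) = Id1 D (FO F X)) \<and>
    (\<forall>f\<in>Arr C. \<forall>g\<in>Arr C. Cod C f = Dom C g \<longrightarrow> FA F (Comp C g f) = Comp D (FA F g) (FA F f)) \<and>
    (\<forall>\<phi>\<in>Cell C. hom2 D (FC F \<phi>) (FA F (Src C \<phi>)) (FA F (Tgt C \<phi>))) \<and>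
    (\<forall>f\<in>Arr C. FC F (Id2 C f) = Id2 D (FA F f)) \<and>
    (\<forall>\<phi>\<in>Cell C. \<forall>\<psi>\<in>Cell C. Tgt C \<phi> = Src C \<psi> \<longrightarrow>
        FC F (VComp C \<psi> \<phi>) = VComp D (FC F \<psi>) (FC F \<phi>)) \<and>
    (\<forall>\<phi>\<in>Cell C. \<forall>\<psi>\<in>Cell C. Cod C (Src C \<phi>) = Dom C (Src C \<psi>) \<longrightarrow>
        FC F (HComp C \<psi> \<phi>) = HComp D (FC F \<psi>) (FC F \<phi>))"

definition two_nat ::
  "('o1,'a1,'c1) twocat \<Rightarrow> ('o2,'a2,'c2) twocat \<Rightarrow> ('o1,'a1,'c1,'o2,'a2,'c2) tnat \<Rightarrow> bool" where
  "two_nat C D \<eta> \<longleftrightarrow>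
    two_functor C D (NSrc \<eta>) \<and> two_functor C D (NTgt \<eta>) \<and>
    (\<forall>X. X \<notin> Obj C \<longrightarrow> NCmp \<eta> X = undefined) \<and>
    (\<forall>X\<in>Obj C. hom1 D (NCmp \<eta> X) (FO (NSrc \<eta>) X) (FO (NTgt \<eta>) X)) \<and>
    (\<forall>f\<in>Arr C. Comp D (FA (NTgt \<eta>) f) (NCmp \<eta> (Dom C f)) =
                Comp D (NCmp \<eta> (Cod C f)) (FA (NSrc \<eta>) f)) \<and>
    (\<forall>\<phi>\<in>Cell C. whiskL D (NCmp \<eta> (Cod C (Src C \<phi>))) (FC (NSrc \<eta>) \<phi>) =
                 whiskR D (FC (NTgt \<eta>) \<phi>) (NCmp \<eta> (Dom C (Src C \<phi>))))"

definition modification ::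
  "('o1,'a1,'c1) twocat \<Rightarrow> ('o2,'a2,'c2) twocat \<Rightarrow> ('o1,'a1,'c1,'o2,'a2,'c2) tmod \<Rightarrow> bool" where
  "modification C D \<Gamma> \<longleftrightarrow>
    two_nat C D (MSrc \<Gamma>) \<and> two_nat C D (MTgt \<Gamma>) \<and>
    NSrc (MSrc \<Gamma>) = NSrc (MTgt \<Gamma>) \<and> NTgt (MSrc \<Gamma>) = NTgt (MTgt \<Gamma>) \<and>
    (\<forall>X. X \<notin> Obj C \<longrightarrow> MCmp \<Gamma> X = undefined) \<and>
    (\<forall>X\<in>Obj C. hom2 D (MCmp \<Gamma> X) (NCmp (MSrc \<Gamma>) X) (NCmp (MTgt \<Gamma>) X)) \<and>
    (\<forall>f\<in>Arr C. whiskR D (MCmp \<Gamma> (Cod C f)) (FA (NSrc (MSrc \<Gamma>)) f) =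
                whiskL D (FA (NTgt (MSrc \<Gamma>)) f) (MCmp \<Gamma> (Dom C f)))"

definition nat_comp ::
  "('o1,'a1,'c1) twocat \<Rightarrow> ('o2,'a2,'c2) twocat \<Rightarrow> ('o1,'a1,'c1,'o2,'a2,'c2) tnat
     \<Rightarrow> ('o1,'a1,'c1,'o2,'a2,'c2) tnat \<Rightarrow> ('o1,'a1,'c1,'o2,'a2,'c2) tnat" where
  "nat_comp C D \<beta> \<alpha> = \<lparr> NSrc = NSrc \<alpha>, NTgt = NTgt \<beta>,
     NCmp = (\<lambda>X. if X \<in> Obj C then Comp D (NCmp \<beta> X) (NCmp \<alpha> X) else undefined) \<rparr>"

definition functor_cat ::
  "('o1,'a1,'c1) twocat \<Rightarrow> ('o2,'a2,'c2) twocat \<Rightarrow>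
   (('o1,'a1,'c1,'o2,'a2,'c2) tfun, ('o1,'a1,'c1,'o2,'a2,'c2) tnat,
    ('o1,'a1,'c1,'o2,'a2,'c2) tmod) twocat" where
  "functor_cat C D = \<lparr>
     Obj = {F. two_functor C D F},
     Arr = {\<eta>. two_nat C D \<eta>},
     Cell = {\<Gamma>. modification C D \<Gamma>},
     Dom = NSrc,
     Cod = NTgt,
     Id1 = (\<lambda>F. \<lparr> NSrc = F, NTgt = F,
              NCmp = (\<lambda>X. if X \<in> Obj C then Id1 D (FO F X) else undefined) \<rparr>),
     Comp = nat_comp C D,
     Src = MSrc,
     Tgt = MTgt,
     Id2 = (\<lambda>\<eta>. \<lparr> MSrc = \<eta>, MTgt = \<eta>,
              MCmp = (\<lambda>X. if X \<in> Obj C then Id2 D (NCmp \<eta> X) else undefined) \<rparr>),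
     VComp = (\<lambda>\<Delta> \<Gamma>. \<lparr> MSrc = MSrc \<Gamma>, MTgt = MTgt \<Delta>,
              MCmp = (\<lambda>X. if X \<in> Obj C then VComp D (MCmp \<Delta> X) (MCmp \<Gamma> X) else undefined) \<rparr>),
     HComp = (\<lambda>\<Delta> \<Gamma>. \<lparr> MSrc = nat_comp C D (MSrc \<Delta>) (MSrc \<Gamma>),
                       MTgt = nat_comp C D (MTgt \<Delta>) (MTgt \<Gamma>),
              MCmp = (\<lambda>X. if X \<in> Obj C then HComp D (MCmp \<Delta> X) (MCmp \<Gamma> X) else undefined) \<rparr>)
   \<rparr>"

definition pointwise_class ::
  "('o1,'a1,'c1) twocat \<Rightarrow> ('o2,'a2,'c2) twocat \<Rightarrow> 'a2 set \<Rightarrow> ('o1,'a1,'c1,'o2,'a2,'c2) tnat set" where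
  "pointwise_class C D K = {\<eta>. two_nat C D \<eta> \<and> (\<forall>X\<in>Obj C. NCmp \<eta> X \<in> K)}"

end

theory Submission
  imports Defs
begin



locale tc =
  fixes A :: "('o,'a,'c) twocat"
  assumes tc: "two_category A"
begin

lemmas tc1 = tc[unfolded two_category_def, THEN conjunct1]
lemmas tc2 = tc[unfolded two_category_def, THEN conjunct2, THEN conjunct1]
lemmas tc3 = tc[unfolded two_category_def, THEN conjunct2, THEN conjunct2, THEN conjunct1]
lemmas tc4 = tc[unfolded two_category_def, THEN conjunct2, THEN conjunct2, THEN conjunct2, THEN conjunct1]
lemmas tc5 = tc[unfolded two_category_def, THEN conjunct2, THEN conjunct2, THEN conjunct2, THEN conjunct2, THEN conjunct1]
lemmas tc6 = tc[unfolded two_category_def, THEN conjunct2, THEN conjunct2, THEN conjunct2, THEN conjunct2, THEN conjunct2, THEN conjunct1]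
lemmas tc7 = tc[unfolded two_category_def, THEN conjunct2, THEN conjunct2, THEN conjunct2, THEN conjunct2, THEN conjunct2, THEN conjunct2, THEN conjunct1]
lemmas tc8 = tc[unfolded two_category_def, THEN conjunct2, THEN conjunct2, THEN conjunct2, THEN conjunct2, THEN conjunct2, THEN conjunct2, THEN conjunct2, THEN conjunct1]
lemmas tc9 = tc[unfolded two_category_def, THEN conjunct2, THEN conjunct2, THEN conjunct2, THEN conjunct2, THEN conjunct2, THEN conjunct2, THEN conjunct2, THEN conjunct2, THEN conjunct1]
lemmas tc10 = tc[unfolded two_category_def, THEN conjunct2, THEN conjunct2, THEN conjunct2, THEN conjunct2, THEN conjunct2, THEN conjunct2, THEN conjunct2, THEN conjunct2, THEN conjunct2, THEN conjunct1]
lemmas tc11 = tc[unfolded two_category_def, THEN conjunct2, THEN conjunct2, THEN conjunct2, THEN conjunct2, THEN conjunct2, THEN conjunct2, THEN conjunct2, THEN conjunct2, THEN conjunct2, THEN conjunct2, THEN conjunct1]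
lemmas tc12 = tc[unfolded two_category_def, THEN conjunct2, THEN conjunct2, THEN conjunct2, THEN conjunct2, THEN conjunct2, THEN conjunct2, THEN conjunct2, THEN conjunct2, THEN conjunct2, THEN conjunct2, THEN conjunct2, THEN conjunct1]
lemmas tc13 = tc[unfolded two_category_def, THEN conjunct2, THEN conjunct2, THEN conjunct2, THEN conjunct2, THEN conjunct2, THEN conjunct2, THEN conjunct2, THEN conjunct2, THEN conjunct2, THEN conjunct2, THEN conjunct2, THEN conjunct2, THEN conjunct1]
lemmas tc14 = tc[unfolded two_category_def, THEN conjunct2, THEN conjunct2, THEN conjunct2, THEN conjunct2, THEN conjunct2, THEN conjunct2, THEN conjunct2, THEN conjunct2, THEN conjunct2, THEN conjunct2, THEN conjunct2, THEN conjunct2, THEN conjunct2, THEN conjunct1]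
lemmas tc15 = tc[unfolded two_category_def, THEN conjunct2, THEN conjunct2, THEN conjunct2, THEN conjunct2, THEN conjunct2, THEN conjunct2, THEN conjunct2, THEN conjunct2, THEN conjunct2, THEN conjunct2, THEN conjunct2, THEN conjunct2, THEN conjunct2, THEN conjunct2]

lemma arr_dc: "f \<in> Arr A \<Longrightarrow> Dom A f \<in> Obj A \<and> Cod A f \<in> Obj A"
  using tc1 by blast

lemma id1_hom: "X \<in> Obj A \<Longrightarrow> hom1 A (Id1 A X) X X"
  using tc2 by blast

lemma comp_hom: "hom1 A f X Y \<Longrightarrow> hom1 A g Y Z \<Longrightarrow> hom1 A (Comp A g f) X Z"
  using tc3 unfolding hom1_def by metis

lemma assoc: "hom1 A f X Y \<Longrightarrow> hom1 A g Y Z \<Longrightarrow> hom1 A h Z W \<Longrightarrow>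
   Comp A h (Comp A g f) = Comp A (Comp A h g) f"
  using tc4 unfolding hom1_def by metis

lemma idl: "hom1 A f X Y \<Longrightarrow> Comp A (Id1 A Y) f = f"
  using tc5 unfolding hom1_def by metis

lemma idr: "hom1 A f X Y \<Longrightarrow> Comp A f (Id1 A X) = f"
  using tc5 unfolding hom1_def by metis

lemma cell: "hom2 A \<phi> f g \<Longrightarrow> f \<in> Arr A \<and> g \<in> Arr A \<and> Dom A f = Dom A g \<and> Cod A f = Cod A g"
  using tc6 unfolding hom2_def by metis

lemma id2_hom: "f \<in> Arr A \<Longrightarrow> hom2 A (Id2 A f) f f"
  using tc7 by blast

lemma vcomp_hom: "hom2 A \<phi> f g \<Longrightarrow> hom2 A \<psi> g h \<Longrightarrow> hom2 A (VComp A \<psi> \<phi>) f h"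
  using tc8 unfolding hom2_def by metis

lemma vassoc: "hom2 A \<phi> f g \<Longrightarrow> hom2 A \<psi> g h \<Longrightarrow> hom2 A \<chi> h k \<Longrightarrow>
   VComp A \<chi> (VComp A \<psi> \<phi>) = VComp A (VComp A \<chi> \<psi>) \<phi>"
  using tc9 unfolding hom2_def by metis

lemma vidl: "hom2 A \<phi> f g \<Longrightarrow> VComp A (Id2 A g) \<phi> = \<phi>"
  using tc10 unfolding hom2_def by metis

lemma vidr: "hom2 A \<phi> f g \<Longrightarrow> VComp A \<phi> (Id2 A f) = \<phi>"
  using tc10 unfolding hom2_def by metis

lemma hcomp_hom: "hom2 A \<phi> f f' \<Longrightarrow> hom2 A \<psi> g g' \<Longrightarrow> Cod A f = Dom A g \<Longrightarrow>
   hom2 A (HComp A \<psi> \<phi>) (Comp A g f) (Comp A g' f')"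
  using tc11 unfolding hom2_def by metis

lemma hassoc: "hom2 A \<phi> f f' \<Longrightarrow> hom2 A \<psi> g g' \<Longrightarrow> hom2 A \<chi> h h' \<Longrightarrow>
   Cod A f = Dom A g \<Longrightarrow> Cod A g = Dom A h \<Longrightarrow>
   HComp A \<chi> (HComp A \<psi> \<phi>) = HComp A (HComp A \<chi> \<psi>) \<phi>"
  using tc12 unfolding hom2_def by metis

lemma hcomp_id2: "hom1 A f X Y \<Longrightarrow> hom1 A g Y Z \<Longrightarrow>
   HComp A (Id2 A g) (Id2 A f) = Id2 A (Comp A g f)"
  using tc14 unfolding hom1_def by metis

lemma interchange: "hom2 A \<phi> f f1 \<Longrightarrow> hom2 A \<phi>' f1 f2 \<Longrightarrow> hom2 A \<psi> g g1 \<Longrightarrow>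
   hom2 A \<psi>' g1 g2 \<Longrightarrow> Cod A f = Dom A g \<Longrightarrow>
   HComp A (VComp A \<psi>' \<psi>) (VComp A \<phi>' \<phi>) = VComp A (HComp A \<psi>' \<phi>') (HComp A \<psi> \<phi>)"
  using tc15 unfolding hom2_def by metis

lemma hom1_arr: "hom1 A f X Y \<Longrightarrow> f \<in> Arr A" by (simp add: hom1_def)

lemma hom1I: "f \<in> Arr A \<Longrightarrow> hom1 A f (Dom A f) (Cod A f)" by (simp add: hom1_def)

lemma wR_hom: "hom2 A \<Psi> b b' \<Longrightarrow> hom1 A f X (Dom A b) \<Longrightarrow>
   hom2 A (whiskR A \<Psi> f) (Comp A b f) (Comp A b' f)"
  unfolding whiskR_def
  by (rule hcomp_hom[OF id2_hom[OF hom1_arr]]) (auto simp: hom1_def)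

lemma wL_hom: "hom2 A \<Psi> b b' \<Longrightarrow> hom1 A f (Cod A b) Z \<Longrightarrow>
   hom2 A (whiskL A f \<Psi>) (Comp A f b) (Comp A f b')"
  unfolding whiskL_def
  by (rule hcomp_hom[OF _ id2_hom[OF hom1_arr]]) (auto simp: hom1_def)

lemma wR_wR: "hom2 A \<Psi> b b' \<Longrightarrow> hom1 A g Y (Dom A b) \<Longrightarrow> hom1 A f X Y \<Longrightarrow>
   whiskR A (whiskR A \<Psi> g) f = whiskR A \<Psi> (Comp A g f)"
  unfolding whiskR_def
  apply (subst hassoc[OF id2_hom[OF hom1_arr] id2_hom[OF hom1_arr], symmetric])
  apply (auto simp: hom1_def hcomp_id2)[5]
  apply (subst hcomp_id2) by auto

lemma wL_wL: "hom2 A \<Psi> b b' \<Longrightarrow> hom1 A f (Cod A b) Y \<Longrightarrow> hom1 A g Y Z \<Longrightarrow>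
   whiskL A g (whiskL A f \<Psi>) = whiskL A (Comp A g f) \<Psi>"
  unfolding whiskL_def
  apply (subst hassoc[OF _ id2_hom[OF hom1_arr] id2_hom[OF hom1_arr]])
  apply (auto simp: hom1_def)[5]
  apply (subst hcomp_id2) by auto

lemma wL_wR: "hom2 A \<Psi> b b' \<Longrightarrow> hom1 A f X (Dom A b) \<Longrightarrow> hom1 A g (Cod A b) Z \<Longrightarrow>
   whiskL A g (whiskR A \<Psi> f) = whiskR A (whiskL A g \<Psi>) f"
  unfolding whiskL_def whiskR_def
  apply (rule hassoc[OF id2_hom[OF hom1_arr] _ id2_hom[OF hom1_arr]])
  by (auto simp: hom1_def)

lemma wR_vcomp: "hom2 A \<phi> b b1 \<Longrightarrow> hom2 A \<psi> b1 b2 \<Longrightarrow> hom1 A f X (Dom A b) \<Longrightarrow>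
   whiskR A (VComp A \<psi> \<phi>) f = VComp A (whiskR A \<psi> f) (whiskR A \<phi> f)"
proof -
  assume a: "hom2 A \<phi> b b1" "hom2 A \<psi> b1 b2" "hom1 A f X (Dom A b)"
  have i: "hom2 A (Id2 A f) f f" using a(3) id2_hom hom1_arr by blast
  have e: "VComp A (Id2 A f) (Id2 A f) = Id2 A f" using vidl[OF i] .
  have "HComp A (VComp A \<psi> \<phi>) (VComp A (Id2 A f) (Id2 A f)) =
        VComp A (HComp A \<psi> (Id2 A f)) (HComp A \<phi> (Id2 A f))"
    by (rule interchange[OF i i a(1) a(2)]) (use a(3) in \<open>simp add: hom1_def\<close>)
  then show ?thesis unfolding whiskR_def e .
qed

lemma wL_vcomp: "hom2 A \<phi> b b1 \<Longrightarrow> hom2 A \<psi> b1 b2 \<Longrightarrow> hom1 A f (Cod A b) Z \<Longrightarrow>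
   whiskL A f (VComp A \<psi> \<phi>) = VComp A (whiskL A f \<psi>) (whiskL A f \<phi>)"
proof -
  assume a: "hom2 A \<phi> b b1" "hom2 A \<psi> b1 b2" "hom1 A f (Cod A b) Z"
  have i: "hom2 A (Id2 A f) f f" using a(3) id2_hom hom1_arr by blast
  have e: "VComp A (Id2 A f) (Id2 A f) = Id2 A f" using vidl[OF i] .
  have "HComp A (VComp A (Id2 A f) (Id2 A f)) (VComp A \<psi> \<phi>) =
        VComp A (HComp A (Id2 A f) \<psi>) (HComp A (Id2 A f) \<phi>)"
    by (rule interchange[OF a(1) a(2) i i]) (use a(3) in \<open>simp add: hom1_def\<close>)
  then show ?thesis unfolding whiskL_def e .
qed

lemma wR_id2: "hom1 A b Y Z \<Longrightarrow> hom1 A f X Y \<Longrightarrow> whiskR A (Id2 A b) f = Id2 A (Comp A b f)"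
  unfolding whiskR_def by (rule hcomp_id2)

lemma wL_id2: "hom1 A b Y Z \<Longrightarrow> hom1 A f Z W \<Longrightarrow> whiskL A f (Id2 A b) = Id2 A (Comp A f b)"
  unfolding whiskL_def by (rule hcomp_id2)

lemma iso2_I: "hom2 A \<Psi> b b' \<Longrightarrow> hom2 A \<Psi>i b' b \<Longrightarrow> VComp A \<Psi>i \<Psi> = Id2 A b \<Longrightarrow>
   VComp A \<Psi> \<Psi>i = Id2 A b' \<Longrightarrow> iso2 A \<Psi>"
  unfolding iso2_def hom2_def by (intro conjI exI[of _ \<Psi>i]) simp_all

lemma iso2_D: "iso2 A \<Psi> \<Longrightarrow> hom2 A \<Psi> b b' \<Longrightarrow>
   \<exists>\<Psi>i. hom2 A \<Psi>i b' b \<and> VComp A \<Psi>i \<Psi> = Id2 A b \<and> VComp A \<Psi> \<Psi>i = Id2 A b'"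
  unfolding iso2_def hom2_def by auto

lemma iso2_id2: "f \<in> Arr A \<Longrightarrow> iso2 A (Id2 A f)"
  by (rule iso2_I[OF id2_hom id2_hom vidl[OF id2_hom] vidl[OF id2_hom]])

lemma iso2_wR: "iso2 A \<Psi> \<Longrightarrow> hom2 A \<Psi> b b' \<Longrightarrow> hom1 A f X (Dom A b) \<Longrightarrow> iso2 A (whiskR A \<Psi> f)"
proof -
  assume a: "iso2 A \<Psi>" "hom2 A \<Psi> b b'" "hom1 A f X (Dom A b)"
  obtain \<Psi>i where i: "hom2 A \<Psi>i b' b" "VComp A \<Psi>i \<Psi> = Id2 A b" "VComp A \<Psi> \<Psi>i = Id2 A b'"
    using iso2_D[OF a(1,2)] by blast
  have c: "Dom A b' = Dom A b" "Cod A b' = Cod A b" "b \<in> Arr A" "b' \<in> Arr A" using cell[OF a(2)] by auto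
  have a3: "hom1 A f X (Dom A b')" using a(3) c by simp
  show ?thesis
  proof (rule iso2_I)
    show "hom2 A (whiskR A \<Psi> f) (Comp A b f) (Comp A b' f)" by (rule wR_hom[OF a(2,3)])
    show "hom2 A (whiskR A \<Psi>i f) (Comp A b' f) (Comp A b f)" by (rule wR_hom[OF i(1) a3])
    have "VComp A (whiskR A \<Psi>i f) (whiskR A \<Psi> f) = whiskR A (Id2 A b) f"
      using wR_vcomp[OF a(2) i(1) a(3)] i(2) by simp
    also have "\<dots> = Id2 A (Comp A b f)" by (rule wR_id2[OF hom1I[OF c(3)] a(3)])
    finally show "VComp A (whiskR A \<Psi>i f) (whiskR A \<Psi> f) = Id2 A (Comp A b f)" .
    have "VComp A (whiskR A \<Psi> f) (whiskR A \<Psi>i f) = whiskR A (Id2 A b') f"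
      using wR_vcomp[OF i(1) a(2) a3] i(3) by simp
    also have "\<dots> = Id2 A (Comp A b' f)" by (rule wR_id2[OF hom1I[OF c(4)] a3])
    finally show "VComp A (whiskR A \<Psi> f) (whiskR A \<Psi>i f) = Id2 A (Comp A b' f)" .
  qed
qed

lemma iso2_wL: "iso2 A \<Psi> \<Longrightarrow> hom2 A \<Psi> b b' \<Longrightarrow> hom1 A f (Cod A b) Z \<Longrightarrow> iso2 A (whiskL A f \<Psi>)"
proof -
  assume a: "iso2 A \<Psi>" "hom2 A \<Psi> b b'" "hom1 A f (Cod A b) Z"
  obtain \<Psi>i where i: "hom2 A \<Psi>i b' b" "VComp A \<Psi>i \<Psi> = Id2 A b" "VComp A \<Psi> \<Psi>i = Id2 A b'"
    using iso2_D[OF a(1,2)] by blast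
  have c: "Dom A b' = Dom A b" "Cod A b' = Cod A b" "b \<in> Arr A" "b' \<in> Arr A" using cell[OF a(2)] by auto
  have a3: "hom1 A f (Cod A b') Z" using a(3) c by simp
  show ?thesis
  proof (rule iso2_I)
    show "hom2 A (whiskL A f \<Psi>) (Comp A f b) (Comp A f b')" by (rule wL_hom[OF a(2,3)])
    show "hom2 A (whiskL A f \<Psi>i) (Comp A f b') (Comp A f b)" by (rule wL_hom[OF i(1) a3])
    have "VComp A (whiskL A f \<Psi>i) (whiskL A f \<Psi>) = whiskL A f (Id2 A b)"
      using wL_vcomp[OF a(2) i(1) a(3)] i(2) by simp
    also have "\<dots> = Id2 A (Comp A f b)" by (rule wL_id2[OF hom1I[OF c(3)] a(3)])
    finally show "VComp A (whiskL A f \<Psi>i) (whiskL A f \<Psi>) = Id2 A (Comp A f b)" .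
    have "VComp A (whiskL A f \<Psi>) (whiskL A f \<Psi>i) = whiskL A f (Id2 A b')"
      using wL_vcomp[OF i(1) a(2) a3] i(3) by simp
    also have "\<dots> = Id2 A (Comp A f b')" by (rule wL_id2[OF hom1I[OF c(4)] a3])
    finally show "VComp A (whiskL A f \<Psi>) (whiskL A f \<Psi>i) = Id2 A (Comp A f b')" .
  qed
qed

lemma inv_unique: "hom2 A c x y \<Longrightarrow> hom2 A a y x \<Longrightarrow> hom2 A b y x \<Longrightarrow>
   VComp A a c = Id2 A x \<Longrightarrow> VComp A c b = Id2 A y \<Longrightarrow> a = b"
proof -
  assume h: "hom2 A c x y" "hom2 A a y x" "hom2 A b y x"
     "VComp A a c = Id2 A x" "VComp A c b = Id2 A y"
  have "a = VComp A a (Id2 A y)" using vidr[OF h(2)] by simp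
  also have "\<dots> = VComp A a (VComp A c b)" using h(5) by simp
  also have "\<dots> = VComp A (VComp A a c) b" by (rule vassoc[OF h(3) h(1) h(2)])
  also have "\<dots> = b" using h(4) vidl[OF h(3)] by simp
  finally show ?thesis .
qed

end



locale P28 = C: tc C + D: tc D
  for C :: "('o1,'a1,'c1) twocat" and D :: "('o2,'a2,'c2) twocat" +
  fixes E M :: "'a2 set"
  assumes efs: "enhanced_fs D E M" and epi: "\<forall>\<epsilon>\<in>E. two_epi D \<epsilon>"
begin

lemmas efs' = efs[unfolded enhanced_fs_def Let_def]

lemma E_arr: "\<epsilon> \<in> E \<Longrightarrow> \<epsilon> \<in> Arr D" using efs'[THEN conjunct1] by (rule subsetD)
lemma M_arr: "\<mu> \<in> M \<Longrightarrow> \<mu> \<in> Arr D" using efs'[THEN conjunct2, THEN conjunct1] by (rule subsetD)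
lemma iso_E: "iso1 D f \<Longrightarrow> f \<in> E" using efs'[THEN conjunct2, THEN conjunct2, THEN conjunct1] by blast
lemma iso_M: "iso1 D f \<Longrightarrow> f \<in> M" using efs'[THEN conjunct2, THEN conjunct2, THEN conjunct2, THEN conjunct1] by blast
lemma fact_i: "\<alpha> \<in> Arr D \<Longrightarrow> \<exists>\<epsilon>\<in>E. \<exists>\<mu>\<in>M. Cod D \<epsilon> = Dom D \<mu> \<and> \<alpha> = Comp D \<mu> \<epsilon>"
  using efs'[THEN conjunct2, THEN conjunct2, THEN conjunct2, THEN conjunct2, THEN conjunct1] by (rule bspec)

lemmas ii_all = efs'[THEN conjunct2, THEN conjunct2, THEN conjunct2, THEN conjunct2, THEN conjunct2, THEN conjunct1]
lemmas iii_all = efs'[THEN conjunct2, THEN conjunct2, THEN conjunct2, THEN conjunct2, THEN conjunct2, THEN conjunct2]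

definition Pii where
  "Pii \<epsilon> \<mu> \<alpha> \<alpha>' \<Psi> \<delta> \<Psi>' \<longleftrightarrow> hom1 D \<delta> (Cod D \<epsilon>) (Dom D \<mu>) \<and> hom2 D \<Psi>' \<alpha>' (Comp D \<mu> \<delta>) \<and> iso2 D \<Psi>' \<and>
            Comp D \<delta> \<epsilon> = \<alpha> \<and> whiskR D \<Psi>' \<epsilon> = \<Psi>"

lemma lift_ii:
  assumes "\<epsilon> \<in> E" "\<mu> \<in> M" "hom1 D \<alpha> (Dom D \<epsilon>) (Dom D \<mu>)" "hom1 D \<alpha>' (Cod D \<epsilon>) (Cod D \<mu>)"
    "hom2 D \<Psi> (Comp D \<alpha>' \<epsilon>) (Comp D \<mu> \<alpha>)" "iso2 D \<Psi>"
  shows "\<exists>\<delta> \<Psi>'. Pii \<epsilon> \<mu> \<alpha> \<alpha>' \<Psi> \<delta> \<Psi>'"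
    and "Pii \<epsilon> \<mu> \<alpha> \<alpha>' \<Psi> \<delta>1 \<Psi>1 \<Longrightarrow> Pii \<epsilon> \<mu> \<alpha> \<alpha>' \<Psi> \<delta>2 \<Psi>2 \<Longrightarrow> \<delta>1 = \<delta>2 \<and> \<Psi>1 = \<Psi>2"
    and "Pii \<epsilon> \<mu> \<alpha> \<alpha>' \<Psi> \<delta> \<Psi>' \<Longrightarrow> \<Psi> = Id2 D (Comp D \<alpha>' \<epsilon>) \<Longrightarrow> Comp D \<mu> \<delta> = \<alpha>' \<and> \<Psi>' = Id2 D \<alpha>'"
proof -
  have H: "(\<exists>!(\<delta>, \<Psi>'). Pii \<epsilon> \<mu> \<alpha> \<alpha>' \<Psi> \<delta> \<Psi>') \<and>
       (\<forall>\<delta> \<Psi>'. Pii \<epsilon> \<mu> \<alpha> \<alpha>' \<Psi> \<delta> \<Psi>' \<longrightarrow>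
            \<Psi> = Id2 D (Comp D \<alpha>' \<epsilon>) \<longrightarrow> Comp D \<mu> \<delta> = \<alpha>' \<and> \<Psi>' = Id2 D \<alpha>')"
    unfolding Pii_def by (rule ii_all[rule_format, OF assms])
  then show "\<exists>\<delta> \<Psi>'. Pii \<epsilon> \<mu> \<alpha> \<alpha>' \<Psi> \<delta> \<Psi>'" by auto
  from H show "Pii \<epsilon> \<mu> \<alpha> \<alpha>' \<Psi> \<delta>1 \<Psi>1 \<Longrightarrow> Pii \<epsilon> \<mu> \<alpha> \<alpha>' \<Psi> \<delta>2 \<Psi>2 \<Longrightarrow> \<delta>1 = \<delta>2 \<and> \<Psi>1 = \<Psi>2"
    by (metis (mono_tags, lifting) Pair_inject case_prodI)
  from H show "Pii \<epsilon> \<mu> \<alpha> \<alpha>' \<Psi> \<delta> \<Psi>' \<Longrightarrow> \<Psi> = Id2 D (Comp D \<alpha>' \<epsilon>) \<Longrightarrow> Comp D \<mu> \<delta> = \<alpha>' \<and> \<Psi>' = Id2 D \<alpha>'"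
    by blast
qed

lemma lift_iii:
  assumes "\<epsilon> \<in> E" "\<mu> \<in> M"
    "hom1 D \<alpha>1 (Dom D \<epsilon>) (Dom D \<mu>)" "hom1 D \<alpha>2 (Dom D \<epsilon>) (Dom D \<mu>)"
    "hom1 D \<alpha>1' (Cod D \<epsilon>) (Cod D \<mu>)" "hom1 D \<alpha>2' (Cod D \<epsilon>) (Cod D \<mu>)"
    "Comp D \<alpha>1' \<epsilon> = Comp D \<mu> \<alpha>1" "Comp D \<alpha>2' \<epsilon> = Comp D \<mu> \<alpha>2"
    "hom2 D \<Phi> \<alpha>1 \<alpha>2" "hom2 D \<Phi>' \<alpha>1' \<alpha>2'" "whiskL D \<mu> \<Phi> = whiskR D \<Phi>' \<epsilon>"
    "hom1 D \<delta>1 (Cod D \<epsilon>) (Dom D \<mu>)" "Comp D \<delta>1 \<epsilon> = \<alpha>1" "Comp D \<mu> \<delta>1 = \<alpha>1'"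
    "hom1 D \<delta>2 (Cod D \<epsilon>) (Dom D \<mu>)" "Comp D \<delta>2 \<epsilon> = \<alpha>2" "Comp D \<mu> \<delta>2 = \<alpha>2'"
  shows "\<exists>!\<Delta>. hom2 D \<Delta> \<delta>1 \<delta>2 \<and> whiskR D \<Delta> \<epsilon> = \<Phi> \<and> whiskL D \<mu> \<Delta> = \<Phi>'"
  by (rule iii_all[rule_format, OF assms])

lemma strict_lift:
  assumes "\<epsilon> \<in> E" "\<mu> \<in> M" "hom1 D \<alpha> (Dom D \<epsilon>) (Dom D \<mu>)" "hom1 D \<alpha>' (Cod D \<epsilon>) (Cod D \<mu>)"
    "Comp D \<alpha>' \<epsilon> = Comp D \<mu> \<alpha>"
  shows "\<exists>!\<delta>. hom1 D \<delta> (Cod D \<epsilon>) (Dom D \<mu>) \<and> Comp D \<delta> \<epsilon> = \<alpha> \<and> Comp D \<mu> \<delta> = \<alpha>'"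
proof -
  have e: "hom1 D \<epsilon> (Dom D \<epsilon>) (Cod D \<epsilon>)" using E_arr[OF assms(1)] D.hom1I by blast
  have m: "hom1 D \<mu> (Dom D \<mu>) (Cod D \<mu>)" using M_arr[OF assms(2)] D.hom1I by blast
  have c1: "hom1 D (Comp D \<alpha>' \<epsilon>) (Dom D \<epsilon>) (Cod D \<mu>)" by (rule D.comp_hom[OF e assms(4)])
  let ?I = "Id2 D (Comp D \<alpha>' \<epsilon>)"
  have h: "hom2 D ?I (Comp D \<alpha>' \<epsilon>) (Comp D \<mu> \<alpha>)"
    using D.id2_hom[OF D.hom1_arr[OF c1]] assms(5) by simp
  have i: "iso2 D ?I" by (rule D.iso2_id2[OF D.hom1_arr[OF c1]])
  obtain \<delta> \<Psi>' where P: "Pii \<epsilon> \<mu> \<alpha> \<alpha>' ?I \<delta> \<Psi>'" using lift_ii(1)[OF assms(1-4) h i] by blast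
  have s: "Comp D \<mu> \<delta> = \<alpha>'" using lift_ii(3)[OF assms(1-4) h i P] by simp
  show ?thesis
  proof (rule ex1I[of _ \<delta>])
    show "hom1 D \<delta> (Cod D \<epsilon>) (Dom D \<mu>) \<and> Comp D \<delta> \<epsilon> = \<alpha> \<and> Comp D \<mu> \<delta> = \<alpha>'"
      using P s unfolding Pii_def by blast
    fix \<delta>2 assume d2: "hom1 D \<delta>2 (Cod D \<epsilon>) (Dom D \<mu>) \<and> Comp D \<delta>2 \<epsilon> = \<alpha> \<and> Comp D \<mu> \<delta>2 = \<alpha>'"
    have a'arr: "\<alpha>' \<in> Arr D" using assms(4) D.hom1_arr by blast
    have "Pii \<epsilon> \<mu> \<alpha> \<alpha>' ?I \<delta>2 (Id2 D \<alpha>')"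
      unfolding Pii_def using d2 D.id2_hom[OF a'arr] D.iso2_id2[OF a'arr]
        D.wR_id2[OF assms(4) e] by simp
    then show "\<delta>2 = \<delta>" using lift_ii(2)[OF assms(1-4) h i _ P] by blast
  qed
qed

lemma epi_cancel:
  assumes "\<epsilon> \<in> E" "hom2 D \<Psi> \<beta> \<beta>'" "hom2 D \<Psi>' \<beta> \<beta>'" "Dom D \<beta> = Cod D \<epsilon>"
    "whiskR D \<Psi> \<epsilon> = whiskR D \<Psi>' \<epsilon>"
  shows "\<Psi> = \<Psi>'"
proof -
  have c: "\<beta> \<in> Arr D" "\<beta>' \<in> Arr D" "Dom D \<beta>' = Dom D \<beta>" "Cod D \<beta>' = Cod D \<beta>"
    using D.cell[OF assms(2)] by auto
  have "hom1 D \<beta> (Cod D \<epsilon>) (Cod D \<beta>)" "hom1 D \<beta>' (Cod D \<epsilon>) (Cod D \<beta>)"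
    using c assms(4) by (auto simp: hom1_def)
  then show ?thesis using epi assms(1) assms(2,3,5) unfolding two_epi_def by blast
qed

end



context P28 begin

abbreviation "DC \<equiv> functor_cat C D"

lemma DC_simps[simp]:
  "Obj DC = {F. two_functor C D F}" "Arr DC = {\<eta>. two_nat C D \<eta>}"
  "Cell DC = {\<Gamma>. modification C D \<Gamma>}" "Dom DC = NSrc" "Cod DC = NTgt"
  "Comp DC = nat_comp C D" "Src DC = MSrc" "Tgt DC = MTgt"
  by (simp_all add: functor_cat_def)

lemma DC_Id2: "Id2 DC \<eta> = \<lparr> MSrc = \<eta>, MTgt = \<eta>,
              MCmp = (\<lambda>X. if X \<in> Obj C then Id2 D (NCmp \<eta> X) else undefined) \<rparr>"
  by (simp add: functor_cat_def)

lemma DC_Id1: "Id1 DC F = \<lparr> NSrc = F, NTgt = F,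
              NCmp = (\<lambda>X. if X \<in> Obj C then Id1 D (FO F X) else undefined) \<rparr>"
  by (simp add: functor_cat_def)

lemma DC_VComp: "VComp DC \<Delta> \<Gamma> = \<lparr> MSrc = MSrc \<Gamma>, MTgt = MTgt \<Delta>,
              MCmp = (\<lambda>X. if X \<in> Obj C then VComp D (MCmp \<Delta> X) (MCmp \<Gamma> X) else undefined) \<rparr>"
  by (simp add: functor_cat_def)

lemma hom1_DC: "hom1 DC \<eta> F G \<longleftrightarrow> two_nat C D \<eta> \<and> NSrc \<eta> = F \<and> NTgt \<eta> = G"
  by (simp add: hom1_def)

lemma hom2_DC: "hom2 DC \<Gamma> \<eta> \<eta>' \<longleftrightarrow> modification C D \<Gamma> \<and> MSrc \<Gamma> = \<eta> \<and> MTgt \<Gamma> = \<eta>'"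
  by (simp add: hom2_def)

lemma nc_simps[simp]: "NSrc (nat_comp C D \<beta> \<alpha>) = NSrc \<alpha>" "NTgt (nat_comp C D \<beta> \<alpha>) = NTgt \<beta>"
  "X \<in> Obj C \<Longrightarrow> NCmp (nat_comp C D \<beta> \<alpha>) X = Comp D (NCmp \<beta> X) (NCmp \<alpha> X)"
  by (simp_all add: nat_comp_def)

lemma wR_DC: "whiskR DC \<Psi> \<epsilon> = \<lparr> MSrc = nat_comp C D (MSrc \<Psi>) \<epsilon>, MTgt = nat_comp C D (MTgt \<Psi>) \<epsilon>,
     MCmp = (\<lambda>X. if X \<in> Obj C then whiskR D (MCmp \<Psi> X) (NCmp \<epsilon> X) else undefined) \<rparr>"
  by (auto simp: whiskR_def functor_cat_def intro!: ext)

lemma wL_DC: "whiskL DC \<mu> \<Phi> = \<lparr> MSrc = nat_comp C D \<mu> (MSrc \<Phi>), MTgt = nat_comp C D \<mu> (MTgt \<Phi>),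
     MCmp = (\<lambda>X. if X \<in> Obj C then whiskL D (NCmp \<mu> X) (MCmp \<Phi> X) else undefined) \<rparr>"
  by (auto simp: whiskL_def functor_cat_def intro!: ext)

context fixes F assumes F: "two_functor C D F" begin
lemma fO: "X \<in> Obj C \<Longrightarrow> FO F X \<in> Obj D" using F unfolding two_functor_def by blast
lemma fA: "f \<in> Arr C \<Longrightarrow> hom1 D (FA F f) (FO F (Dom C f)) (FO F (Cod C f))"
  using F unfolding two_functor_def by blast
lemma fA': "hom1 C f X Y \<Longrightarrow> hom1 D (FA F f) (FO F X) (FO F Y)"
  using fA unfolding hom1_def by blast
lemma fId1: "X \<in> Obj C \<Longrightarrow> FA F (Id1 C X) = Id1 D (FO F X)" using F unfolding two_functor_def by blast
lemma fComp: "f \<in> Arr C \<Longrightarrow> g \<in> Arr C \<Longrightarrow> Cod C f = Dom C g \<Longrightarrow> FA F (Comp C g f) = Comp D (FA F g) (FA F f)"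
  using F unfolding two_functor_def by blast
lemma fC: "\<phi> \<in> Cell C \<Longrightarrow> hom2 D (FC F \<phi>) (FA F (Src C \<phi>)) (FA F (Tgt C \<phi>))"
  using F unfolding two_functor_def by blast
lemma fC': "hom2 C \<phi> f g \<Longrightarrow> hom2 D (FC F \<phi>) (FA F f) (FA F g)"
  using fC unfolding hom2_def by blast
lemma fId2: "f \<in> Arr C \<Longrightarrow> FC F (Id2 C f) = Id2 D (FA F f)" using F unfolding two_functor_def by blast
lemma fV: "\<phi> \<in> Cell C \<Longrightarrow> \<psi> \<in> Cell C \<Longrightarrow> Tgt C \<phi> = Src C \<psi> \<Longrightarrow>
        FC F (VComp C \<psi> \<phi>) = VComp D (FC F \<psi>) (FC F \<phi>)" using F unfolding two_functor_def by blast
lemma fH: "\<phi> \<in> Cell C \<Longrightarrow> \<psi> \<in> Cell C \<Longrightarrow> Cod C (Src C \<phi>) = Dom C (Src C \<psi>) \<Longrightarrow>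
        FC F (HComp C \<psi> \<phi>) = HComp D (FC F \<psi>) (FC F \<phi>)" using F unfolding two_functor_def by blast
end

context fixes \<eta> assumes N: "two_nat C D \<eta>" begin
lemma nS: "two_functor C D (NSrc \<eta>)" using N unfolding two_nat_def by blast
lemma nT: "two_functor C D (NTgt \<eta>)" using N unfolding two_nat_def by blast
lemma nU: "X \<notin> Obj C \<Longrightarrow> NCmp \<eta> X = undefined" using N unfolding two_nat_def by blast
lemma nH: "X \<in> Obj C \<Longrightarrow> hom1 D (NCmp \<eta> X) (FO (NSrc \<eta>) X) (FO (NTgt \<eta>) X)"
  using N unfolding two_nat_def by blast
lemma nN: "f \<in> Arr C \<Longrightarrow> Comp D (FA (NTgt \<eta>) f) (NCmp \<eta> (Dom C f)) =
                Comp D (NCmp \<eta> (Cod C f)) (FA (NSrc \<eta>) f)"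
  using N unfolding two_nat_def by blast
lemma nN': "hom1 C f X Y \<Longrightarrow> Comp D (FA (NTgt \<eta>) f) (NCmp \<eta> X) = Comp D (NCmp \<eta> Y) (FA (NSrc \<eta>) f)"
  using nN unfolding hom1_def by blast
lemma n2: "\<phi> \<in> Cell C \<Longrightarrow> whiskL D (NCmp \<eta> (Cod C (Src C \<phi>))) (FC (NSrc \<eta>) \<phi>) =
                 whiskR D (FC (NTgt \<eta>) \<phi>) (NCmp \<eta> (Dom C (Src C \<phi>)))"
  using N unfolding two_nat_def by blast
lemma n2': "hom2 C \<phi> f g \<Longrightarrow> hom1 C f X Y \<Longrightarrow> whiskL D (NCmp \<eta> Y) (FC (NSrc \<eta>) \<phi>) =
                 whiskR D (FC (NTgt \<eta>) \<phi>) (NCmp \<eta> X)"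
  using n2 unfolding hom1_def hom2_def by blast
end

context fixes \<Gamma> assumes G: "modification C D \<Gamma>" begin
lemma mS: "two_nat C D (MSrc \<Gamma>)" using G unfolding modification_def by blast
lemma mT: "two_nat C D (MTgt \<Gamma>)" using G unfolding modification_def by blast
lemma mSS: "NSrc (MSrc \<Gamma>) = NSrc (MTgt \<Gamma>)" using G unfolding modification_def by blast
lemma mTT: "NTgt (MSrc \<Gamma>) = NTgt (MTgt \<Gamma>)" using G unfolding modification_def by blast
lemma mU: "X \<notin> Obj C \<Longrightarrow> MCmp \<Gamma> X = undefined" using G unfolding modification_def by blast
lemma mH: "X \<in> Obj C \<Longrightarrow> hom2 D (MCmp \<Gamma> X) (NCmp (MSrc \<Gamma>) X) (NCmp (MTgt \<Gamma>) X)"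
  using G unfolding modification_def by blast
lemma mN: "f \<in> Arr C \<Longrightarrow> whiskR D (MCmp \<Gamma> (Cod C f)) (FA (NSrc (MSrc \<Gamma>)) f) =
                whiskL D (FA (NTgt (MSrc \<Gamma>)) f) (MCmp \<Gamma> (Dom C f))"
  using G unfolding modification_def by blast
lemma mN': "hom1 C f X Y \<Longrightarrow> whiskR D (MCmp \<Gamma> Y) (FA (NSrc (MSrc \<Gamma>)) f) =
                whiskL D (FA (NTgt (MSrc \<Gamma>)) f) (MCmp \<Gamma> X)"
  using mN unfolding hom1_def by blast
end

lemma nat_eqI:
  assumes "two_nat C D a" "two_nat C D b" "NSrc a = NSrc b" "NTgt a = NTgt b"
    "\<And>X. X \<in> Obj C \<Longrightarrow> NCmp a X = NCmp b X"
  shows "a = b"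
proof (rule tnat.equality)
  show "NCmp a = NCmp b"
  proof
    fix X show "NCmp a X = NCmp b X"
      by (cases "X \<in> Obj C") (use assms nU in auto)
  qed
qed (use assms in auto)

lemma mod_eqI:
  assumes "modification C D a" "modification C D b" "MSrc a = MSrc b" "MTgt a = MTgt b"
    "\<And>X. X \<in> Obj C \<Longrightarrow> MCmp a X = MCmp b X"
  shows "a = b"
proof (rule tmod.equality)
  show "MCmp a = MCmp b"
  proof
    fix X show "MCmp a X = MCmp b X"
      by (cases "X \<in> Obj C") (use assms mU in auto)
  qed
qed (use assms in auto)

lemma Cobj: "f \<in> Arr C \<Longrightarrow> Dom C f \<in> Obj C \<and> Cod C f \<in> Obj C" by (rule C.arr_dc)

lemma nat_comp_nat:
  assumes b: "two_nat C D \<beta>" and a: "two_nat C D \<alpha>" and eq: "NTgt \<alpha> = NSrc \<beta>"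
  shows "two_nat C D (nat_comp C D \<beta> \<alpha>)"
  unfolding two_nat_def
proof (intro conjI ballI allI impI)
  show "two_functor C D (NSrc (nat_comp C D \<beta> \<alpha>))" using nS[OF a] by simp
  show "two_functor C D (NTgt (nat_comp C D \<beta> \<alpha>))" using nT[OF b] by simp
  show "NCmp (nat_comp C D \<beta> \<alpha>) X = undefined" if "X \<notin> Obj C" for X
    using that by (simp add: nat_comp_def)
  show "hom1 D (NCmp (nat_comp C D \<beta> \<alpha>) X) (FO (NSrc (nat_comp C D \<beta> \<alpha>)) X) (FO (NTgt (nat_comp C D \<beta> \<alpha>)) X)"
    if X: "X \<in> Obj C" for X
    using D.comp_hom[OF nH[OF a X] ] nH[OF b X] eq X by simp
next
  fix f assume f: "f \<in> Arr C"
  let ?X = "Dom C f" and ?Y = "Cod C f"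
  have X: "?X \<in> Obj C" and Y: "?Y \<in> Obj C" using Cobj[OF f] by auto
  have hf: "hom1 C f ?X ?Y" using f by (simp add: hom1_def)
  have aX: "hom1 D (NCmp \<alpha> ?X) (FO (NSrc \<alpha>) ?X) (FO (NSrc \<beta>) ?X)" using nH[OF a X] eq by simp
  have bX: "hom1 D (NCmp \<beta> ?X) (FO (NSrc \<beta>) ?X) (FO (NTgt \<beta>) ?X)" using nH[OF b X] .
  have aY: "hom1 D (NCmp \<alpha> ?Y) (FO (NSrc \<alpha>) ?Y) (FO (NSrc \<beta>) ?Y)" using nH[OF a Y] eq by simp
  have bY: "hom1 D (NCmp \<beta> ?Y) (FO (NSrc \<beta>) ?Y) (FO (NTgt \<beta>) ?Y)" using nH[OF b Y] .
  have Tb: "hom1 D (FA (NTgt \<beta>) f) (FO (NTgt \<beta>) ?X) (FO (NTgt \<beta>) ?Y)" using fA'[OF nT[OF b] hf] .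
  have Sb: "hom1 D (FA (NSrc \<beta>) f) (FO (NSrc \<beta>) ?X) (FO (NSrc \<beta>) ?Y)" using fA'[OF nS[OF b] hf] .
  have Sa: "hom1 D (FA (NSrc \<alpha>) f) (FO (NSrc \<alpha>) ?X) (FO (NSrc \<alpha>) ?Y)" using fA'[OF nS[OF a] hf] .
  have "Comp D (FA (NTgt \<beta>) f) (Comp D (NCmp \<beta> ?X) (NCmp \<alpha> ?X))
      = Comp D (Comp D (FA (NTgt \<beta>) f) (NCmp \<beta> ?X)) (NCmp \<alpha> ?X)" by (rule D.assoc[OF aX bX Tb])
  also have "\<dots> = Comp D (Comp D (NCmp \<beta> ?Y) (FA (NSrc \<beta>) f)) (NCmp \<alpha> ?X)" using nN'[OF b hf] by simp
  also have "\<dots> = Comp D (NCmp \<beta> ?Y) (Comp D (FA (NSrc \<beta>) f) (NCmp \<alpha> ?X))" by (rule D.assoc[OF aX Sb bY, symmetric])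
  also have "\<dots> = Comp D (NCmp \<beta> ?Y) (Comp D (NCmp \<alpha> ?Y) (FA (NSrc \<alpha>) f))" using nN'[OF a hf] eq by simp
  also have "\<dots> = Comp D (Comp D (NCmp \<beta> ?Y) (NCmp \<alpha> ?Y)) (FA (NSrc \<alpha>) f)" by (rule D.assoc[OF Sa aY bY])
  finally show "Comp D (FA (NTgt (nat_comp C D \<beta> \<alpha>)) f) (NCmp (nat_comp C D \<beta> \<alpha>) (Dom C f)) =
        Comp D (NCmp (nat_comp C D \<beta> \<alpha>) (Cod C f)) (FA (NSrc (nat_comp C D \<beta> \<alpha>)) f)"
    using X Y by simp
next
  fix \<phi> assume p: "\<phi> \<in> Cell C"
  let ?f = "Src C \<phi>" and ?g = "Tgt C \<phi>"
  let ?X = "Dom C ?f" and ?Y = "Cod C ?f"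
  have cc: "?f \<in> Arr C" "?g \<in> Arr C" "Dom C ?g = ?X" "Cod C ?g = ?Y" using C.cell[of \<phi> ?f ?g] p
    by (auto simp: hom2_def)
  have X: "?X \<in> Obj C" and Y: "?Y \<in> Obj C" using Cobj[OF cc(1)] by auto
  have hp: "hom2 C \<phi> ?f ?g" using p by (simp add: hom2_def)
  have hf: "hom1 C ?f ?X ?Y" using cc by (simp add: hom1_def)
  have aX: "hom1 D (NCmp \<alpha> ?X) (FO (NSrc \<alpha>) ?X) (FO (NSrc \<beta>) ?X)" using nH[OF a X] eq by simp
  have bX: "hom1 D (NCmp \<beta> ?X) (FO (NSrc \<beta>) ?X) (FO (NTgt \<beta>) ?X)" using nH[OF b X] .
  have aY: "hom1 D (NCmp \<alpha> ?Y) (FO (NSrc \<alpha>) ?Y) (FO (NSrc \<beta>) ?Y)" using nH[OF a Y] eq by simp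
  have bY: "hom1 D (NCmp \<beta> ?Y) (FO (NSrc \<beta>) ?Y) (FO (NTgt \<beta>) ?Y)" using nH[OF b Y] .
  have Pa: "hom2 D (FC (NSrc \<alpha>) \<phi>) (FA (NSrc \<alpha>) ?f) (FA (NSrc \<alpha>) ?g)" by (rule fC'[OF nS[OF a] hp])
  have Pb: "hom2 D (FC (NSrc \<beta>) \<phi>) (FA (NSrc \<beta>) ?f) (FA (NSrc \<beta>) ?g)" by (rule fC'[OF nS[OF b] hp])
  have Pt: "hom2 D (FC (NTgt \<beta>) \<phi>) (FA (NTgt \<beta>) ?f) (FA (NTgt \<beta>) ?g)" by (rule fC'[OF nT[OF b] hp])
  have Saf: "hom1 D (FA (NSrc \<alpha>) ?f) (FO (NSrc \<alpha>) ?X) (FO (NSrc \<alpha>) ?Y)" using fA'[OF nS[OF a] hf] .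
  have Sbf: "hom1 D (FA (NSrc \<beta>) ?f) (FO (NSrc \<beta>) ?X) (FO (NSrc \<beta>) ?Y)" using fA'[OF nS[OF b] hf] .
  have Tbf: "hom1 D (FA (NTgt \<beta>) ?f) (FO (NTgt \<beta>) ?X) (FO (NTgt \<beta>) ?Y)" using fA'[OF nT[OF b] hf] .
  have "whiskL D (Comp D (NCmp \<beta> ?Y) (NCmp \<alpha> ?Y)) (FC (NSrc \<alpha>) \<phi>)
      = whiskL D (NCmp \<beta> ?Y) (whiskL D (NCmp \<alpha> ?Y) (FC (NSrc \<alpha>) \<phi>))"
    by (rule D.wL_wL[OF Pa _ bY, symmetric]) (use aY Saf in \<open>simp add: hom1_def\<close>)
  also have "\<dots> = whiskL D (NCmp \<beta> ?Y) (whiskR D (FC (NSrc \<beta>) \<phi>) (NCmp \<alpha> ?X))"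
    using n2'[OF a hp hf] eq by simp
  also have "\<dots> = whiskR D (whiskL D (NCmp \<beta> ?Y) (FC (NSrc \<beta>) \<phi>)) (NCmp \<alpha> ?X)"
    by (rule D.wL_wR[OF Pb]) (use aX bY Sbf in \<open>simp_all add: hom1_def\<close>)
  also have "\<dots> = whiskR D (whiskR D (FC (NTgt \<beta>) \<phi>) (NCmp \<beta> ?X)) (NCmp \<alpha> ?X)"
    using n2'[OF b hp hf] by simp
  also have "\<dots> = whiskR D (FC (NTgt \<beta>) \<phi>) (Comp D (NCmp \<beta> ?X) (NCmp \<alpha> ?X))"
    by (rule D.wR_wR[OF Pt _ aX]) (use bX Tbf in \<open>simp add: hom1_def\<close>)
  finally show "whiskL D (NCmp (nat_comp C D \<beta> \<alpha>) (Cod C (Src C \<phi>))) (FC (NSrc (nat_comp C D \<beta> \<alpha>)) \<phi>) =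
         whiskR D (FC (NTgt (nat_comp C D \<beta> \<alpha>)) \<phi>) (NCmp (nat_comp C D \<beta> \<alpha>) (Dom C (Src C \<phi>)))"
    using X Y by simp
qed

end



context P28 begin

lemma iso2_DC_D:
  assumes i: "iso2 DC \<Gamma>" and X: "X \<in> Obj C"
  shows "iso2 D (MCmp \<Gamma> X)"
proof -
  from i obtain \<psi> where G: "modification C D \<Gamma>" and h: "hom2 DC \<psi> (MTgt \<Gamma>) (MSrc \<Gamma>)"
    and e1: "VComp DC \<psi> \<Gamma> = Id2 DC (MSrc \<Gamma>)" and e2: "VComp DC \<Gamma> \<psi> = Id2 DC (MTgt \<Gamma>)"
    unfolding iso2_def by auto
  have P: "modification C D \<psi>" "MSrc \<psi> = MTgt \<Gamma>" "MTgt \<psi> = MSrc \<Gamma>" using h by (auto simp: hom2_DC)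
  have a1: "VComp D (MCmp \<psi> X) (MCmp \<Gamma> X) = Id2 D (NCmp (MSrc \<Gamma>) X)"
    using arg_cong[OF e1, of "\<lambda>r. MCmp r X"] X by (simp add: DC_VComp DC_Id2)
  have a2: "VComp D (MCmp \<Gamma> X) (MCmp \<psi> X) = Id2 D (NCmp (MTgt \<Gamma>) X)"
    using arg_cong[OF e2, of "\<lambda>r. MCmp r X"] X by (simp add: DC_VComp DC_Id2)
  show ?thesis
    by (rule D.iso2_I[OF mH[OF G X] _ a1 a2]) (use mH[OF P(1) X] P in simp)
qed

lemma iso2_DC_I:
  assumes G: "modification C D \<Gamma>" and I: "\<And>X. X \<in> Obj C \<Longrightarrow> iso2 D (MCmp \<Gamma> X)"
  shows "iso2 DC \<Gamma>"
proof -
  define inv where "inv X = (SOME \<psi>. hom2 D \<psi> (NCmp (MTgt \<Gamma>) X) (NCmp (MSrc \<Gamma>) X) \<and>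
     VComp D \<psi> (MCmp \<Gamma> X) = Id2 D (NCmp (MSrc \<Gamma>) X) \<and> VComp D (MCmp \<Gamma> X) \<psi> = Id2 D (NCmp (MTgt \<Gamma>) X))" for X
  have invP: "hom2 D (inv X) (NCmp (MTgt \<Gamma>) X) (NCmp (MSrc \<Gamma>) X) \<and>
     VComp D (inv X) (MCmp \<Gamma> X) = Id2 D (NCmp (MSrc \<Gamma>) X) \<and> VComp D (MCmp \<Gamma> X) (inv X) = Id2 D (NCmp (MTgt \<Gamma>) X)"
    if X: "X \<in> Obj C" for X
    unfolding inv_def by (rule someI_ex, rule D.iso2_D[OF I[OF X] mH[OF G X]])
  define \<Gamma>i where "\<Gamma>i = \<lparr> MSrc = MTgt \<Gamma>, MTgt = MSrc \<Gamma>,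
      MCmp = (\<lambda>X. if X \<in> Obj C then inv X else undefined) \<rparr>"
  have mi: "modification C D \<Gamma>i"
    unfolding modification_def
  proof (intro conjI ballI allI impI)
    show "two_nat C D (MSrc \<Gamma>i)" "two_nat C D (MTgt \<Gamma>i)" using mS[OF G] mT[OF G] by (simp_all add: \<Gamma>i_def)
    show "NSrc (MSrc \<Gamma>i) = NSrc (MTgt \<Gamma>i)" "NTgt (MSrc \<Gamma>i) = NTgt (MTgt \<Gamma>i)"
      using mSS[OF G] mTT[OF G] by (simp_all add: \<Gamma>i_def)
    show "MCmp \<Gamma>i X = undefined" if "X \<notin> Obj C" for X using that by (simp add: \<Gamma>i_def)
    show "hom2 D (MCmp \<Gamma>i X) (NCmp (MSrc \<Gamma>i) X) (NCmp (MTgt \<Gamma>i) X)" if "X \<in> Obj C" for X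
      using invP[OF that] that by (simp add: \<Gamma>i_def)
  next
    fix f assume f: "f \<in> Arr C"
    let ?X = "Dom C f" and ?Y = "Cod C f"
    have X: "?X \<in> Obj C" and Y: "?Y \<in> Obj C" using Cobj[OF f] by auto
    let ?S = "NSrc (MSrc \<Gamma>)" and ?T = "NTgt (MSrc \<Gamma>)"
    have hf: "hom1 C f ?X ?Y" using f by (simp add: hom1_def)
    have S: "two_functor C D ?S" and T: "two_functor C D ?T" using nS[OF mS[OF G]] nT[OF mS[OF G]] by auto
    have Sf: "hom1 D (FA ?S f) (FO ?S ?X) (FO ?S ?Y)" by (rule fA'[OF S hf])
    have Tf: "hom1 D (FA ?T f) (FO ?T ?X) (FO ?T ?Y)" by (rule fA'[OF T hf])
    have hX: "hom2 D (MCmp \<Gamma> ?X) (NCmp (MSrc \<Gamma>) ?X) (NCmp (MTgt \<Gamma>) ?X)" by (rule mH[OF G X])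
    have hY: "hom2 D (MCmp \<Gamma> ?Y) (NCmp (MSrc \<Gamma>) ?Y) (NCmp (MTgt \<Gamma>) ?Y)" by (rule mH[OF G Y])
    have sX: "hom1 D (NCmp (MSrc \<Gamma>) ?X) (FO ?S ?X) (FO ?T ?X)" using nH[OF mS[OF G] X] .
    have sY: "hom1 D (NCmp (MSrc \<Gamma>) ?Y) (FO ?S ?Y) (FO ?T ?Y)" using nH[OF mS[OF G] Y] .
    have tX: "hom1 D (NCmp (MTgt \<Gamma>) ?X) (FO ?S ?X) (FO ?T ?X)" using nH[OF mT[OF G] X] mSS[OF G] mTT[OF G] by simp
    have tY: "hom1 D (NCmp (MTgt \<Gamma>) ?Y) (FO ?S ?Y) (FO ?T ?Y)" using nH[OF mT[OF G] Y] mSS[OF G] mTT[OF G] by simp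
    have iX: "hom2 D (inv ?X) (NCmp (MTgt \<Gamma>) ?X) (NCmp (MSrc \<Gamma>) ?X)" using invP[OF X] by blast
    have iY: "hom2 D (inv ?Y) (NCmp (MTgt \<Gamma>) ?Y) (NCmp (MSrc \<Gamma>) ?Y)" using invP[OF Y] by blast
    have Sf': "hom1 D (FA ?S f) (FO ?S ?X) (Dom D (NCmp (MSrc \<Gamma>) ?Y))" using Sf sY by (simp add: hom1_def)
    have Sf'': "hom1 D (FA ?S f) (FO ?S ?X) (Dom D (NCmp (MTgt \<Gamma>) ?Y))" using Sf tY by (simp add: hom1_def)
    have Tf': "hom1 D (FA ?T f) (Cod D (NCmp (MSrc \<Gamma>) ?X)) (FO ?T ?Y)" using Tf sX by (simp add: hom1_def)
    have Tf'': "hom1 D (FA ?T f) (Cod D (NCmp (MTgt \<Gamma>) ?X)) (FO ?T ?Y)" using Tf tX by (simp add: hom1_def)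
    let ?c = "whiskR D (MCmp \<Gamma> ?Y) (FA ?S f)"
    have c1: "hom2 D ?c (Comp D (NCmp (MSrc \<Gamma>) ?Y) (FA ?S f)) (Comp D (NCmp (MTgt \<Gamma>) ?Y) (FA ?S f))"
      by (rule D.wR_hom[OF hY Sf'])
    have a1: "hom2 D (whiskR D (inv ?Y) (FA ?S f)) (Comp D (NCmp (MTgt \<Gamma>) ?Y) (FA ?S f)) (Comp D (NCmp (MSrc \<Gamma>) ?Y) (FA ?S f))"
      by (rule D.wR_hom[OF iY Sf''])
    have b1: "hom2 D (whiskL D (FA ?T f) (inv ?X)) (Comp D (FA ?T f) (NCmp (MTgt \<Gamma>) ?X)) (Comp D (FA ?T f) (NCmp (MSrc \<Gamma>) ?X))"
      by (rule D.wL_hom[OF iX Tf''])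
    have nat1: "Comp D (FA ?T f) (NCmp (MTgt \<Gamma>) ?X) = Comp D (NCmp (MTgt \<Gamma>) ?Y) (FA ?S f)"
      using nN'[OF mT[OF G] hf] mSS[OF G] mTT[OF G] by simp
    have nat0: "Comp D (FA ?T f) (NCmp (MSrc \<Gamma>) ?X) = Comp D (NCmp (MSrc \<Gamma>) ?Y) (FA ?S f)"
      using nN'[OF mS[OF G] hf] by simp
    have ceq: "?c = whiskL D (FA ?T f) (MCmp \<Gamma> ?X)" by (rule mN'[OF G hf])
    have "VComp D (whiskR D (inv ?Y) (FA ?S f)) ?c = whiskR D (VComp D (inv ?Y) (MCmp \<Gamma> ?Y)) (FA ?S f)"
      by (rule D.wR_vcomp[OF hY iY Sf', symmetric])
    also have "\<dots> = whiskR D (Id2 D (NCmp (MSrc \<Gamma>) ?Y)) (FA ?S f)" using invP[OF Y] by simp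
    also have "\<dots> = Id2 D (Comp D (NCmp (MSrc \<Gamma>) ?Y) (FA ?S f))" by (rule D.wR_id2[OF sY Sf])
    finally have e1: "VComp D (whiskR D (inv ?Y) (FA ?S f)) ?c = Id2 D (Comp D (NCmp (MSrc \<Gamma>) ?Y) (FA ?S f))" .
    have "VComp D ?c (whiskL D (FA ?T f) (inv ?X)) = VComp D (whiskL D (FA ?T f) (MCmp \<Gamma> ?X)) (whiskL D (FA ?T f) (inv ?X))"
      using ceq by simp
    also have "\<dots> = whiskL D (FA ?T f) (VComp D (MCmp \<Gamma> ?X) (inv ?X))"
      by (rule D.wL_vcomp[OF iX hX Tf'', symmetric])
    also have "\<dots> = whiskL D (FA ?T f) (Id2 D (NCmp (MTgt \<Gamma>) ?X))" using invP[OF X] by simp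
    also have "\<dots> = Id2 D (Comp D (FA ?T f) (NCmp (MTgt \<Gamma>) ?X))" by (rule D.wL_id2[OF tX Tf])
    finally have e2: "VComp D ?c (whiskL D (FA ?T f) (inv ?X)) = Id2 D (Comp D (NCmp (MTgt \<Gamma>) ?Y) (FA ?S f))"
      using nat1 by simp
    have "whiskR D (inv ?Y) (FA ?S f) = whiskL D (FA ?T f) (inv ?X)"
      by (rule D.inv_unique[OF c1 a1 _ e1 e2]) (use b1 nat0 nat1 in simp)
    then show "whiskR D (MCmp \<Gamma>i (Cod C f)) (FA (NSrc (MSrc \<Gamma>i)) f) =
          whiskL D (FA (NTgt (MSrc \<Gamma>i)) f) (MCmp \<Gamma>i (Dom C f))"
      using X Y mSS[OF G] mTT[OF G] by (simp add: \<Gamma>i_def)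
  qed
  show ?thesis unfolding iso2_def
  proof (intro conjI exI[of _ \<Gamma>i])
    show "\<Gamma> \<in> Cell DC" using G by simp
    show "hom2 DC \<Gamma>i (Tgt DC \<Gamma>) (Src DC \<Gamma>)" using mi by (simp add: hom2_DC \<Gamma>i_def)
    show "VComp DC \<Gamma>i \<Gamma> = Id2 DC (Src DC \<Gamma>)"
      unfolding DC_VComp DC_Id2 using invP by (auto simp: \<Gamma>i_def intro!: ext)
    show "VComp DC \<Gamma> \<Gamma>i = Id2 DC (Tgt DC \<Gamma>)"
      unfolding DC_VComp DC_Id2 using invP by (auto simp: \<Gamma>i_def intro!: ext)
  qed
qed

lemma iso1_DC_D:
  assumes i: "iso1 DC \<eta>" and X: "X \<in> Obj C"
  shows "iso1 D (NCmp \<eta> X)"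
proof -
  from i obtain g where N: "two_nat C D \<eta>" and h: "hom1 DC g (NTgt \<eta>) (NSrc \<eta>)"
    and e1: "nat_comp C D g \<eta> = Id1 DC (NSrc \<eta>)" and e2: "nat_comp C D \<eta> g = Id1 DC (NTgt \<eta>)"
    unfolding iso1_def by auto
  have g: "two_nat C D g" "NSrc g = NTgt \<eta>" "NTgt g = NSrc \<eta>" using h by (auto simp: hom1_DC)
  have a1: "Comp D (NCmp g X) (NCmp \<eta> X) = Id1 D (FO (NSrc \<eta>) X)"
    using arg_cong[OF e1, of "\<lambda>r. NCmp r X"] X by (simp add: DC_Id1)
  have a2: "Comp D (NCmp \<eta> X) (NCmp g X) = Id1 D (FO (NTgt \<eta>) X)"
    using arg_cong[OF e2, of "\<lambda>r. NCmp r X"] X by (simp add: DC_Id1)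
  have hX: "hom1 D (NCmp \<eta> X) (FO (NSrc \<eta>) X) (FO (NTgt \<eta>) X)" by (rule nH[OF N X])
  have gX: "hom1 D (NCmp g X) (FO (NTgt \<eta>) X) (FO (NSrc \<eta>) X)" using nH[OF g(1) X] g by simp
  show ?thesis unfolding iso1_def
    using hX gX a1 a2 by (auto simp: hom1_def)
qed

end



lemma ex1_pairI: assumes "Q a b" "\<And>x y. Q x y \<Longrightarrow> x = a \<and> y = b" shows "\<exists>!(x, y). Q x y"
proof (rule ex1I[of _ "(a, b)"])
  show "case (a, b) of (x, y) \<Rightarrow> Q x y" using assms(1) by simp
next
  fix p assume "case p of (x, y) \<Rightarrow> Q x y"
  then show "p = (a, b)" using assms(2) by (cases p) simp
qed

context P28 begin

lemma pwD: "\<eta> \<in> pointwise_class C D K \<Longrightarrow> two_nat C D \<eta>"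
  "\<eta> \<in> pointwise_class C D K \<Longrightarrow> X \<in> Obj C \<Longrightarrow> NCmp \<eta> X \<in> K"
  by (auto simp: pointwise_class_def)

context
  fixes \<epsilon> \<mu> \<alpha> \<alpha>' \<Psi>
  assumes eE: "\<epsilon> \<in> pointwise_class C D E" and mM: "\<mu> \<in> pointwise_class C D M"
   and ha: "hom1 DC \<alpha> (NSrc \<epsilon>) (NSrc \<mu>)" and ha': "hom1 DC \<alpha>' (NTgt \<epsilon>) (NTgt \<mu>)"
   and hP: "hom2 DC \<Psi> (nat_comp C D \<alpha>' \<epsilon>) (nat_comp C D \<mu> \<alpha>)" and iP: "iso2 DC \<Psi>"
begin

definition "dp X = (SOME p. Pii (NCmp \<epsilon> X) (NCmp \<mu> X) (NCmp \<alpha> X) (NCmp \<alpha>' X) (MCmp \<Psi> X) (fst p) (snd p))"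
definition "dd X = fst (dp X)"
definition "PP X = snd (dp X)"

lemma ne: "two_nat C D \<epsilon>" using pwD(1)[OF eE] .
lemma nm: "two_nat C D \<mu>" using pwD(1)[OF mM] .
lemma na: "two_nat C D \<alpha>" "NSrc \<alpha> = NSrc \<epsilon>" "NTgt \<alpha> = NSrc \<mu>" using ha by (auto simp: hom1_DC)
lemma na': "two_nat C D \<alpha>'" "NSrc \<alpha>' = NTgt \<epsilon>" "NTgt \<alpha>' = NTgt \<mu>" using ha' by (auto simp: hom1_DC)
lemma mP: "modification C D \<Psi>" "MSrc \<Psi> = nat_comp C D \<alpha>' \<epsilon>" "MTgt \<Psi> = nat_comp C D \<mu> \<alpha>"
  using hP by (auto simp: hom2_DC)

lemma Fs: "two_functor C D (NSrc \<epsilon>)" "two_functor C D (NTgt \<epsilon>)"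
   "two_functor C D (NSrc \<mu>)" "two_functor C D (NTgt \<mu>)"
  using nS[OF ne] nT[OF ne] nS[OF nm] nT[OF nm] by auto

context fixes X assumes X: "X \<in> Obj C" begin
lemma eX: "hom1 D (NCmp \<epsilon> X) (FO (NSrc \<epsilon>) X) (FO (NTgt \<epsilon>) X)" "NCmp \<epsilon> X \<in> E"
  using nH[OF ne X] pwD(2)[OF eE X] by auto
lemma mX: "hom1 D (NCmp \<mu> X) (FO (NSrc \<mu>) X) (FO (NTgt \<mu>) X)" "NCmp \<mu> X \<in> M"
  using nH[OF nm X] pwD(2)[OF mM X] by auto
lemma aX: "hom1 D (NCmp \<alpha> X) (FO (NSrc \<epsilon>) X) (FO (NSrc \<mu>) X)" using nH[OF na(1) X] na by simp
lemma a'X: "hom1 D (NCmp \<alpha>' X) (FO (NTgt \<epsilon>) X) (FO (NTgt \<mu>) X)" using nH[OF na'(1) X] na' by simp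
lemma PsX: "hom2 D (MCmp \<Psi> X) (Comp D (NCmp \<alpha>' X) (NCmp \<epsilon> X)) (Comp D (NCmp \<mu> X) (NCmp \<alpha> X))"
   "iso2 D (MCmp \<Psi> X)"
  using mH[OF mP(1) X] mP X iso2_DC_D[OF iP X] by auto
lemma domcod: "Dom D (NCmp \<epsilon> X) = FO (NSrc \<epsilon>) X" "Cod D (NCmp \<epsilon> X) = FO (NTgt \<epsilon>) X"
  "Dom D (NCmp \<mu> X) = FO (NSrc \<mu>) X" "Cod D (NCmp \<mu> X) = FO (NTgt \<mu>) X"
  using eX mX by (auto simp: hom1_def)
lemma aX': "hom1 D (NCmp \<alpha> X) (Dom D (NCmp \<epsilon> X)) (Dom D (NCmp \<mu> X))" using aX domcod by simp
lemma a'X': "hom1 D (NCmp \<alpha>' X) (Cod D (NCmp \<epsilon> X)) (Cod D (NCmp \<mu> X))" using a'X domcod by simp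

lemma dpP: "Pii (NCmp \<epsilon> X) (NCmp \<mu> X) (NCmp \<alpha> X) (NCmp \<alpha>' X) (MCmp \<Psi> X) (dd X) (PP X)"
proof -
  have "\<exists>p. Pii (NCmp \<epsilon> X) (NCmp \<mu> X) (NCmp \<alpha> X) (NCmp \<alpha>' X) (MCmp \<Psi> X) (fst p) (snd p)"
    using lift_ii(1)[OF eX(2) mX(2) aX' a'X' PsX] by auto
  then show ?thesis unfolding dd_def PP_def dp_def by (rule someI_ex)
qed

lemma dpU: "Pii (NCmp \<epsilon> X) (NCmp \<mu> X) (NCmp \<alpha> X) (NCmp \<alpha>' X) (MCmp \<Psi> X) \<delta>2 \<Psi>2 \<Longrightarrow> \<delta>2 = dd X \<and> \<Psi>2 = PP X"
  using lift_ii(2)[OF eX(2) mX(2) aX' a'X' PsX _ dpP] by blast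

lemma dX: "hom1 D (dd X) (FO (NTgt \<epsilon>) X) (FO (NSrc \<mu>) X)"
   "hom2 D (PP X) (NCmp \<alpha>' X) (Comp D (NCmp \<mu> X) (dd X))" "iso2 D (PP X)"
   "Comp D (dd X) (NCmp \<epsilon> X) = NCmp \<alpha> X" "whiskR D (PP X) (NCmp \<epsilon> X) = MCmp \<Psi> X"
  using dpP domcod unfolding Pii_def by auto
end

lemma dnat:
  assumes hf: "hom1 C f X Y"
  shows "Comp D (dd Y) (FA (NTgt \<epsilon>) f) = Comp D (FA (NSrc \<mu>) f) (dd X) \<and>
         whiskR D (PP Y) (FA (NTgt \<epsilon>) f) = whiskL D (FA (NTgt \<mu>) f) (PP X)"
proof -
  have X: "X \<in> Obj C" and Y: "Y \<in> Obj C" using hf Cobj by (auto simp: hom1_def)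
  let ?F = "NSrc \<epsilon>" and ?F' = "NTgt \<epsilon>" and ?G = "NSrc \<mu>" and ?G' = "NTgt \<mu>"
  have Ff: "hom1 D (FA ?F f) (FO ?F X) (FO ?F Y)" by (rule fA'[OF Fs(1) hf])
  have F'f: "hom1 D (FA ?F' f) (FO ?F' X) (FO ?F' Y)" by (rule fA'[OF Fs(2) hf])
  have Gf: "hom1 D (FA ?G f) (FO ?G X) (FO ?G Y)" by (rule fA'[OF Fs(3) hf])
  have G'f: "hom1 D (FA ?G' f) (FO ?G' X) (FO ?G' Y)" by (rule fA'[OF Fs(4) hf])
  note eX = eX[OF X] and eY = eX[OF Y] and mX = mX[OF X] and mY = mX[OF Y]
  note aX = aX[OF X] and aY = aX[OF Y] and a'X = a'X[OF X] and a'Y = a'X[OF Y]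
  note dX = dX[OF X] and dY = dX[OF Y]
  note dcX = domcod[OF X] and dcY = domcod[OF Y]
  have natE: "Comp D (FA ?F' f) (NCmp \<epsilon> X) = Comp D (NCmp \<epsilon> Y) (FA ?F f)" by (rule nN'[OF ne hf])
  have natM: "Comp D (FA ?G' f) (NCmp \<mu> X) = Comp D (NCmp \<mu> Y) (FA ?G f)" by (rule nN'[OF nm hf])
  have natA: "Comp D (FA ?G f) (NCmp \<alpha> X) = Comp D (NCmp \<alpha> Y) (FA ?F f)" using nN'[OF na(1) hf] na by simp
  have natA': "Comp D (FA ?G' f) (NCmp \<alpha>' X) = Comp D (NCmp \<alpha>' Y) (FA ?F' f)" using nN'[OF na'(1) hf] na' by simp
  have modP: "whiskR D (MCmp \<Psi> Y) (FA ?F f) = whiskL D (FA ?G' f) (MCmp \<Psi> X)"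
    using mN'[OF mP(1) hf] mP na' by simp
  let ?a = "Comp D (NCmp \<alpha> Y) (FA ?F f)" and ?a' = "Comp D (NCmp \<alpha>' Y) (FA ?F' f)"
  let ?P0 = "whiskR D (MCmp \<Psi> Y) (FA ?F f)"
  have ha0: "hom1 D ?a (Dom D (NCmp \<epsilon> X)) (Dom D (NCmp \<mu> Y))" using D.comp_hom[OF Ff aY] dcX dcY by simp
  have ha0': "hom1 D ?a' (Cod D (NCmp \<epsilon> X)) (Cod D (NCmp \<mu> Y))" using D.comp_hom[OF F'f a'Y] dcX dcY by simp
  have PsY: "hom2 D (MCmp \<Psi> Y) (Comp D (NCmp \<alpha>' Y) (NCmp \<epsilon> Y)) (Comp D (NCmp \<mu> Y) (NCmp \<alpha> Y))" 
    using PsX[OF Y] by simp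
  have Ff': "hom1 D (FA ?F f) (FO ?F X) (Dom D (Comp D (NCmp \<alpha>' Y) (NCmp \<epsilon> Y)))"
    using Ff eY(1) a'Y D.comp_hom by (metis hom1_def)
  have e1: "Comp D ?a' (NCmp \<epsilon> X) = Comp D (Comp D (NCmp \<alpha>' Y) (NCmp \<epsilon> Y)) (FA ?F f)"
    using D.assoc[OF eX(1) F'f a'Y] natE D.assoc[OF Ff eY(1) a'Y] by simp
  have e2: "Comp D (NCmp \<mu> Y) ?a = Comp D (Comp D (NCmp \<mu> Y) (NCmp \<alpha> Y)) (FA ?F f)"
    by (rule D.assoc[OF Ff aY mY(1)])
  have hP0: "hom2 D ?P0 (Comp D ?a' (NCmp \<epsilon> X)) (Comp D (NCmp \<mu> Y) ?a)"
    using D.wR_hom[OF PsY Ff'] e1 e2 by simp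
  have iP0: "iso2 D ?P0" by (rule D.iso2_wR[OF PsX(2)[OF Y] PsY Ff'])
  note L = lift_ii(2)[OF eX(2) mY(2) ha0 ha0' hP0 iP0]
  have PY: "hom2 D (PP Y) (NCmp \<alpha>' Y) (Comp D (NCmp \<mu> Y) (dd Y))" using dY by simp
  have F'f': "hom1 D (FA ?F' f) (FO ?F' X) (Dom D (NCmp \<alpha>' Y))" using F'f a'Y by (simp add: hom1_def)
  have c1: "Pii (NCmp \<epsilon> X) (NCmp \<mu> Y) ?a ?a' ?P0 (Comp D (dd Y) (FA ?F' f)) (whiskR D (PP Y) (FA ?F' f))"
    unfolding Pii_def
  proof (intro conjI)
    show "hom1 D (Comp D (dd Y) (FA ?F' f)) (Cod D (NCmp \<epsilon> X)) (Dom D (NCmp \<mu> Y))"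
      using D.comp_hom[OF F'f dY(1)] dcX dcY by simp
    show "hom2 D (whiskR D (PP Y) (FA ?F' f)) ?a' (Comp D (NCmp \<mu> Y) (Comp D (dd Y) (FA ?F' f)))"
      using D.wR_hom[OF PY F'f'] D.assoc[OF F'f dY(1) mY(1)] by simp
    show "iso2 D (whiskR D (PP Y) (FA ?F' f))" by (rule D.iso2_wR[OF dY(3) PY F'f'])
    show "Comp D (Comp D (dd Y) (FA ?F' f)) (NCmp \<epsilon> X) = ?a"
      using D.assoc[OF eX(1) F'f dY(1)] natE D.assoc[OF Ff eY(1) dY(1)] dY(4) by simp
    have "whiskR D (whiskR D (PP Y) (FA ?F' f)) (NCmp \<epsilon> X) = whiskR D (PP Y) (Comp D (FA ?F' f) (NCmp \<epsilon> X))"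
      by (rule D.wR_wR[OF PY F'f' eX(1)])
    also have "\<dots> = whiskR D (PP Y) (Comp D (NCmp \<epsilon> Y) (FA ?F f))" using natE by simp
    also have "\<dots> = ?P0"
    proof -
      have eY': "hom1 D (NCmp \<epsilon> Y) (FO ?F Y) (Dom D (NCmp \<alpha>' Y))" using eY(1) a'Y by (simp add: hom1_def)
      show ?thesis using D.wR_wR[OF PY eY' Ff] dY(5) by simp
    qed
    finally show "whiskR D (whiskR D (PP Y) (FA ?F' f)) (NCmp \<epsilon> X) = ?P0" .
  qed
  have PX: "hom2 D (PP X) (NCmp \<alpha>' X) (Comp D (NCmp \<mu> X) (dd X))" using dX by simp
  have G'f': "hom1 D (FA ?G' f) (Cod D (NCmp \<alpha>' X)) (FO ?G' Y)" using G'f a'X by (simp add: hom1_def)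
  have c2: "Pii (NCmp \<epsilon> X) (NCmp \<mu> Y) ?a ?a' ?P0 (Comp D (FA ?G f) (dd X)) (whiskL D (FA ?G' f) (PP X))"
    unfolding Pii_def
  proof (intro conjI)
    show "hom1 D (Comp D (FA ?G f) (dd X)) (Cod D (NCmp \<epsilon> X)) (Dom D (NCmp \<mu> Y))"
      using D.comp_hom[OF dX(1) Gf] dcX dcY by simp
    have "Comp D (FA ?G' f) (Comp D (NCmp \<mu> X) (dd X)) = Comp D (NCmp \<mu> Y) (Comp D (FA ?G f) (dd X))"
      using D.assoc[OF dX(1) mX(1) G'f] natM D.assoc[OF dX(1) Gf mY(1)] by simp
    then show "hom2 D (whiskL D (FA ?G' f) (PP X)) ?a' (Comp D (NCmp \<mu> Y) (Comp D (FA ?G f) (dd X)))"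
      using D.wL_hom[OF PX G'f'] natA' by simp
    show "iso2 D (whiskL D (FA ?G' f) (PP X))" by (rule D.iso2_wL[OF dX(3) PX G'f'])
    show "Comp D (Comp D (FA ?G f) (dd X)) (NCmp \<epsilon> X) = ?a"
      using D.assoc[OF eX(1) dX(1) Gf] dX(4) natA by simp
    have eXh: "hom1 D (NCmp \<epsilon> X) (FO ?F X) (Dom D (NCmp \<alpha>' X))" using eX(1) a'X by (simp add: hom1_def)
    have "whiskR D (whiskL D (FA ?G' f) (PP X)) (NCmp \<epsilon> X) = whiskL D (FA ?G' f) (whiskR D (PP X) (NCmp \<epsilon> X))"
      by (rule D.wL_wR[OF PX eXh G'f', symmetric])
    also have "\<dots> = ?P0" using dX(5) modP by simp
    finally show "whiskR D (whiskL D (FA ?G' f) (PP X)) (NCmp \<epsilon> X) = ?P0" .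
  qed
  show ?thesis using L[OF c1 c2] by simp
qed

definition "\<delta>0 = \<lparr> NSrc = NTgt \<epsilon>, NTgt = NSrc \<mu>, NCmp = (\<lambda>X. if X \<in> Obj C then dd X else undefined) \<rparr>"

lemma \<delta>0_nat: "two_nat C D \<delta>0"
  unfolding two_nat_def
proof (intro conjI ballI allI impI)
  show "two_functor C D (NSrc \<delta>0)" "two_functor C D (NTgt \<delta>0)" using Fs by (simp_all add: \<delta>0_def)
  show "NCmp \<delta>0 X = undefined" if "X \<notin> Obj C" for X using that by (simp add: \<delta>0_def)
  show "hom1 D (NCmp \<delta>0 X) (FO (NSrc \<delta>0) X) (FO (NTgt \<delta>0) X)" if "X \<in> Obj C" for X
    using dX(1)[OF that] that by (simp add: \<delta>0_def)
next
  fix f assume f: "f \<in> Arr C"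
  have hf: "hom1 C f (Dom C f) (Cod C f)" using f by (simp add: hom1_def)
  show "Comp D (FA (NTgt \<delta>0) f) (NCmp \<delta>0 (Dom C f)) = Comp D (NCmp \<delta>0 (Cod C f)) (FA (NSrc \<delta>0) f)"
    using dnat[OF hf] Cobj[OF f] by (simp add: \<delta>0_def)
next
  fix \<phi> assume p: "\<phi> \<in> Cell C"
  let ?f = "Src C \<phi>" and ?g = "Tgt C \<phi>"
  let ?X = "Dom C ?f" and ?Y = "Cod C ?f"
  have cc: "?f \<in> Arr C" "?g \<in> Arr C" "Dom C ?g = ?X" "Cod C ?g = ?Y" using C.cell[of \<phi> ?f ?g] p
    by (auto simp: hom2_def)
  have X: "?X \<in> Obj C" and Y: "?Y \<in> Obj C" using Cobj[OF cc(1)] by auto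
  have hp: "hom2 C \<phi> ?f ?g" using p by (simp add: hom2_def)
  have hf: "hom1 C ?f ?X ?Y" and hg: "hom1 C ?g ?X ?Y" using cc by (auto simp: hom1_def)
  let ?F = "NSrc \<epsilon>" and ?F' = "NTgt \<epsilon>" and ?G = "NSrc \<mu>"
  note eX = eX[OF X] and eY = eX[OF Y] and dX = dX[OF X] and dY = dX[OF Y] and aX = aX[OF X] and aY = aX[OF Y]
  have F'p: "hom2 D (FC ?F' \<phi>) (FA ?F' ?f) (FA ?F' ?g)" by (rule fC'[OF Fs(2) hp])
  have Fp: "hom2 D (FC ?F \<phi>) (FA ?F ?f) (FA ?F ?g)" by (rule fC'[OF Fs(1) hp])
  have Gp: "hom2 D (FC ?G \<phi>) (FA ?G ?f) (FA ?G ?g)" by (rule fC'[OF Fs(3) hp])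
  have F'f: "hom1 D (FA ?F' ?f) (FO ?F' ?X) (FO ?F' ?Y)" by (rule fA'[OF Fs(2) hf])
  have Ff: "hom1 D (FA ?F ?f) (FO ?F ?X) (FO ?F ?Y)" by (rule fA'[OF Fs(1) hf])
  have Gf: "hom1 D (FA ?G ?f) (FO ?G ?X) (FO ?G ?Y)" by (rule fA'[OF Fs(3) hf])
  have h1: "hom2 D (whiskL D (dd ?Y) (FC ?F' \<phi>)) (Comp D (dd ?Y) (FA ?F' ?f)) (Comp D (dd ?Y) (FA ?F' ?g))"
    by (rule D.wL_hom[OF F'p]) (use dY(1) F'f in \<open>simp add: hom1_def\<close>)
  have h2: "hom2 D (whiskR D (FC ?G \<phi>) (dd ?X)) (Comp D (dd ?Y) (FA ?F' ?f)) (Comp D (dd ?Y) (FA ?F' ?g))"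
    using D.wR_hom[OF Gp, of "dd ?X" "FO ?F' ?X"] dX(1) Gf dnat[OF hf] dnat[OF hg] by (simp add: hom1_def)
  have "whiskR D (whiskL D (dd ?Y) (FC ?F' \<phi>)) (NCmp \<epsilon> ?X) = whiskL D (dd ?Y) (whiskR D (FC ?F' \<phi>) (NCmp \<epsilon> ?X))"
    by (rule D.wL_wR[OF F'p, symmetric]) (use eX(1) F'f dY(1) in \<open>simp_all add: hom1_def\<close>)
  also have "\<dots> = whiskL D (dd ?Y) (whiskL D (NCmp \<epsilon> ?Y) (FC ?F \<phi>))" using n2'[OF ne hp hf] by simp
  also have "\<dots> = whiskL D (Comp D (dd ?Y) (NCmp \<epsilon> ?Y)) (FC ?F \<phi>)"
    by (rule D.wL_wL[OF Fp]) (use eY(1) Ff dY(1) in \<open>simp_all add: hom1_def\<close>)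
  also have "\<dots> = whiskL D (NCmp \<alpha> ?Y) (FC ?F \<phi>)" using dY(4) by simp
  also have "\<dots> = whiskR D (FC ?G \<phi>) (NCmp \<alpha> ?X)" using n2'[OF na(1) hp hf] na by simp
  also have "\<dots> = whiskR D (FC ?G \<phi>) (Comp D (dd ?X) (NCmp \<epsilon> ?X))" using dX(4) by simp
  also have "\<dots> = whiskR D (whiskR D (FC ?G \<phi>) (dd ?X)) (NCmp \<epsilon> ?X)"
    by (rule D.wR_wR[OF Gp, symmetric]) (use eX(1) dX(1) Gf in \<open>simp_all add: hom1_def\<close>)
  finally have eq: "whiskR D (whiskL D (dd ?Y) (FC ?F' \<phi>)) (NCmp \<epsilon> ?X) = whiskR D (whiskR D (FC ?G \<phi>) (dd ?X)) (NCmp \<epsilon> ?X)" .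
  have "whiskL D (dd ?Y) (FC ?F' \<phi>) = whiskR D (FC ?G \<phi>) (dd ?X)"
    by (rule epi_cancel[OF eX(2) h1 h2 _ eq]) (use D.comp_hom[OF F'f dY(1)] eX(1) in \<open>simp add: hom1_def\<close>)
  then show "whiskL D (NCmp \<delta>0 (Cod C (Src C \<phi>))) (FC (NSrc \<delta>0) \<phi>) =
         whiskR D (FC (NTgt \<delta>0) \<phi>) (NCmp \<delta>0 (Dom C (Src C \<phi>)))"
    using X Y by (simp add: \<delta>0_def)
qed


definition "\<Psi>0 = \<lparr> MSrc = \<alpha>', MTgt = nat_comp C D \<mu> \<delta>0, MCmp = (\<lambda>X. if X \<in> Obj C then PP X else undefined) \<rparr>"

lemma \<Psi>0_mod: "modification C D \<Psi>0"
  unfolding modification_def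
proof (intro conjI ballI allI impI)
  show "two_nat C D (MSrc \<Psi>0)" using na' by (simp add: \<Psi>0_def)
  show "two_nat C D (MTgt \<Psi>0)" using nat_comp_nat[OF nm \<delta>0_nat] by (simp add: \<Psi>0_def \<delta>0_def)
  show "NSrc (MSrc \<Psi>0) = NSrc (MTgt \<Psi>0)" "NTgt (MSrc \<Psi>0) = NTgt (MTgt \<Psi>0)"
    using na' by (simp_all add: \<Psi>0_def \<delta>0_def)
  show "MCmp \<Psi>0 X = undefined" if "X \<notin> Obj C" for X using that by (simp add: \<Psi>0_def)
  show "hom2 D (MCmp \<Psi>0 X) (NCmp (MSrc \<Psi>0) X) (NCmp (MTgt \<Psi>0) X)" if "X \<in> Obj C" for X
    using dX(2)[OF that] that by (simp add: \<Psi>0_def \<delta>0_def)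
next
  fix f assume f: "f \<in> Arr C"
  have hf: "hom1 C f (Dom C f) (Cod C f)" using f by (simp add: hom1_def)
  show "whiskR D (MCmp \<Psi>0 (Cod C f)) (FA (NSrc (MSrc \<Psi>0)) f) = whiskL D (FA (NTgt (MSrc \<Psi>0)) f) (MCmp \<Psi>0 (Dom C f))"
    using dnat[OF hf] Cobj[OF f] na' by (simp add: \<Psi>0_def)
qed

lemma main_ii:
  "(\<exists>!(\<delta>, \<Psi>'). hom1 DC \<delta> (NTgt \<epsilon>) (NSrc \<mu>) \<and> hom2 DC \<Psi>' \<alpha>' (nat_comp C D \<mu> \<delta>) \<and> iso2 DC \<Psi>' \<and>
            nat_comp C D \<delta> \<epsilon> = \<alpha> \<and> whiskR DC \<Psi>' \<epsilon> = \<Psi>) \<and>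
   (\<forall>\<delta> \<Psi>'. hom1 DC \<delta> (NTgt \<epsilon>) (NSrc \<mu>) \<and> hom2 DC \<Psi>' \<alpha>' (nat_comp C D \<mu> \<delta>) \<and> iso2 DC \<Psi>' \<and>
            nat_comp C D \<delta> \<epsilon> = \<alpha> \<and> whiskR DC \<Psi>' \<epsilon> = \<Psi> \<longrightarrow>
            \<Psi> = Id2 DC (nat_comp C D \<alpha>' \<epsilon>) \<longrightarrow> nat_comp C D \<mu> \<delta> = \<alpha>' \<and> \<Psi>' = Id2 DC \<alpha>')"
proof -
  have comp: "Pii (NCmp \<epsilon> X) (NCmp \<mu> X) (NCmp \<alpha> X) (NCmp \<alpha>' X) (MCmp \<Psi> X) (NCmp \<delta> X) (MCmp \<Psi>' X)"
    if S: "hom1 DC \<delta> (NTgt \<epsilon>) (NSrc \<mu>) \<and> hom2 DC \<Psi>' \<alpha>' (nat_comp C D \<mu> \<delta>) \<and> iso2 DC \<Psi>' \<and>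
            nat_comp C D \<delta> \<epsilon> = \<alpha> \<and> whiskR DC \<Psi>' \<epsilon> = \<Psi>" and X: "X \<in> Obj C" for \<delta> \<Psi>' X
  proof -
    have d: "two_nat C D \<delta>" "NSrc \<delta> = NTgt \<epsilon>" "NTgt \<delta> = NSrc \<mu>" using S by (auto simp: hom1_DC)
    have p: "modification C D \<Psi>'" "MSrc \<Psi>' = \<alpha>'" "MTgt \<Psi>' = nat_comp C D \<mu> \<delta>" using S by (auto simp: hom2_DC)
    have c1: "Comp D (NCmp \<delta> X) (NCmp \<epsilon> X) = NCmp \<alpha> X"
      using arg_cong[of _ _ "\<lambda>r. NCmp r X", OF conjunct1[OF conjunct2[OF conjunct2[OF conjunct2[OF S]]]]] X by simp
    have c2: "whiskR D (MCmp \<Psi>' X) (NCmp \<epsilon> X) = MCmp \<Psi> X"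
      using arg_cong[of _ _ "\<lambda>r. MCmp r X", OF conjunct2[OF conjunct2[OF conjunct2[OF conjunct2[OF S]]]]] X
      by (simp add: wR_DC)
    show ?thesis unfolding Pii_def
      using nH[OF d(1) X] d mH[OF p(1) X] p X iso2_DC_D[OF conjunct1[OF conjunct2[OF conjunct2[OF S]]] X]
        c1 c2 domcod[OF X] by simp
  qed
  let ?S = "\<lambda>\<delta> \<Psi>'. hom1 DC \<delta> (NTgt \<epsilon>) (NSrc \<mu>) \<and> hom2 DC \<Psi>' \<alpha>' (nat_comp C D \<mu> \<delta>) \<and> iso2 DC \<Psi>' \<and>
            nat_comp C D \<delta> \<epsilon> = \<alpha> \<and> whiskR DC \<Psi>' \<epsilon> = \<Psi>"
  have sol: "?S \<delta>0 \<Psi>0"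
  proof (intro conjI)
    show "hom1 DC \<delta>0 (NTgt \<epsilon>) (NSrc \<mu>)" using \<delta>0_nat by (simp add: hom1_DC \<delta>0_def)
    show "hom2 DC \<Psi>0 \<alpha>' (nat_comp C D \<mu> \<delta>0)" using \<Psi>0_mod by (simp add: hom2_DC \<Psi>0_def)
    show "iso2 DC \<Psi>0"
      by (rule iso2_DC_I[OF \<Psi>0_mod]) (use dX(3) in \<open>simp add: \<Psi>0_def\<close>)
    show "nat_comp C D \<delta>0 \<epsilon> = \<alpha>"
      by (rule nat_eqI[OF nat_comp_nat[OF \<delta>0_nat ne] na(1)])
         (use na dX(4) in \<open>simp_all add: \<delta>0_def\<close>)
    have mt: "nat_comp C D (nat_comp C D \<mu> \<delta>0) \<epsilon> = nat_comp C D \<mu> \<alpha>"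
    proof (rule nat_eqI[OF nat_comp_nat[OF nat_comp_nat[OF nm \<delta>0_nat] ne] nat_comp_nat[OF nm na(1)]])
      show "NSrc (nat_comp C D (nat_comp C D \<mu> \<delta>0) \<epsilon>) = NSrc (nat_comp C D \<mu> \<alpha>)" using na by simp
      show "NTgt (nat_comp C D (nat_comp C D \<mu> \<delta>0) \<epsilon>) = NTgt (nat_comp C D \<mu> \<alpha>)" by simp
      show "NTgt \<epsilon> = NSrc (nat_comp C D \<mu> \<delta>0)" by (simp add: \<delta>0_def)
      show "NTgt \<delta>0 = NSrc \<mu>" by (simp add: \<delta>0_def)
      show "NTgt \<alpha> = NSrc \<mu>" using na by simp
      fix X assume X: "X \<in> Obj C"
      show "NCmp (nat_comp C D (nat_comp C D \<mu> \<delta>0) \<epsilon>) X = NCmp (nat_comp C D \<mu> \<alpha>) X"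
        using X D.assoc[OF eX(1)[OF X] dX(1)[OF X] mX(1)[OF X]] dX(4)[OF X] by (simp add: \<delta>0_def)
    qed
    show "whiskR DC \<Psi>0 \<epsilon> = \<Psi>"
    proof (rule tmod.equality)
      show "MSrc (whiskR DC \<Psi>0 \<epsilon>) = MSrc \<Psi>" using mP by (simp add: wR_DC \<Psi>0_def)
      show "MTgt (whiskR DC \<Psi>0 \<epsilon>) = MTgt \<Psi>" using mP mt by (simp add: wR_DC \<Psi>0_def)
      show "MCmp (whiskR DC \<Psi>0 \<epsilon>) = MCmp \<Psi>"
      proof
        fix X show "MCmp (whiskR DC \<Psi>0 \<epsilon>) X = MCmp \<Psi> X"
          by (cases "X \<in> Obj C") (use dX(5) mU[OF mP(1)] in \<open>simp_all add: wR_DC \<Psi>0_def\<close>)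
      qed
    qed simp
  qed
  have uniq: "\<delta> = \<delta>0 \<and> \<Psi>' = \<Psi>0" if S: "?S \<delta> \<Psi>'" for \<delta> \<Psi>'
  proof -
    have d: "two_nat C D \<delta>" "NSrc \<delta> = NTgt \<epsilon>" "NTgt \<delta> = NSrc \<mu>" using S by (auto simp: hom1_DC)
    have p: "modification C D \<Psi>'" "MSrc \<Psi>' = \<alpha>'" "MTgt \<Psi>' = nat_comp C D \<mu> \<delta>" using S by (auto simp: hom2_DC)
    have u: "NCmp \<delta> X = dd X \<and> MCmp \<Psi>' X = PP X" if X: "X \<in> Obj C" for X
      using dpU[OF X comp[OF S X]] .
    have dd: "\<delta> = \<delta>0" by (rule nat_eqI[OF d(1) \<delta>0_nat]) (use d u in \<open>simp_all add: \<delta>0_def\<close>)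
    have "\<Psi>' = \<Psi>0" by (rule mod_eqI[OF p(1) \<Psi>0_mod]) (use p dd u in \<open>simp_all add: \<Psi>0_def\<close>)
    with dd show ?thesis by simp
  qed
  show ?thesis
  proof (intro conjI allI impI)
    show "\<exists>!(\<delta>, \<Psi>'). ?S \<delta> \<Psi>'" by (rule ex1_pairI[where Q = ?S, OF sol uniq])
  next
    fix \<delta> \<Psi>' assume S: "?S \<delta> \<Psi>'" and I: "\<Psi> = Id2 DC (nat_comp C D \<alpha>' \<epsilon>)"
    have d: "two_nat C D \<delta>" "NSrc \<delta> = NTgt \<epsilon>" "NTgt \<delta> = NSrc \<mu>" using S by (auto simp: hom1_DC)
    have p: "modification C D \<Psi>'" "MSrc \<Psi>' = \<alpha>'" "MTgt \<Psi>' = nat_comp C D \<mu> \<delta>" using S by (auto simp: hom2_DC)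
    have r: "Comp D (NCmp \<mu> X) (NCmp \<delta> X) = NCmp \<alpha>' X \<and> MCmp \<Psi>' X = Id2 D (NCmp \<alpha>' X)" if X: "X \<in> Obj C" for X
    proof -
      have "MCmp \<Psi> X = Id2 D (Comp D (NCmp \<alpha>' X) (NCmp \<epsilon> X))" using I X by (simp add: DC_Id2)
      then show ?thesis using lift_ii(3)[OF eX(2)[OF X] mX(2)[OF X] aX'[OF X] a'X'[OF X] PsX[OF X] comp[OF S X]] by blast
    qed
    have e: "nat_comp C D \<mu> \<delta> = \<alpha>'"
      by (rule nat_eqI[OF nat_comp_nat[OF nm d(1)] na'(1)]) (use d na' r in simp_all)
    show "nat_comp C D \<mu> \<delta> = \<alpha>'" by (rule e)
    show "\<Psi>' = Id2 DC \<alpha>'"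
    proof (rule tmod.equality)
      show "MCmp \<Psi>' = MCmp (Id2 DC \<alpha>')"
      proof
        fix X show "MCmp \<Psi>' X = MCmp (Id2 DC \<alpha>') X"
          by (cases "X \<in> Obj C") (use r mU[OF p(1)] in \<open>simp_all add: DC_Id2\<close>)
      qed
    qed (use p e in \<open>simp_all add: DC_Id2\<close>)
  qed
qed

end
end



context P28 begin

context
  fixes \<epsilon> \<mu> \<alpha>1 \<alpha>2 \<alpha>1' \<alpha>2' \<Phi> \<Phi>' \<delta>1 \<delta>2
  assumes eE: "\<epsilon> \<in> pointwise_class C D E" and mM: "\<mu> \<in> pointwise_class C D M"
   and ha1: "hom1 DC \<alpha>1 (NSrc \<epsilon>) (NSrc \<mu>)" and ha2: "hom1 DC \<alpha>2 (NSrc \<epsilon>) (NSrc \<mu>)"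
   and ha1': "hom1 DC \<alpha>1' (NTgt \<epsilon>) (NTgt \<mu>)" and ha2': "hom1 DC \<alpha>2' (NTgt \<epsilon>) (NTgt \<mu>)"
   and sq1: "nat_comp C D \<alpha>1' \<epsilon> = nat_comp C D \<mu> \<alpha>1" and sq2: "nat_comp C D \<alpha>2' \<epsilon> = nat_comp C D \<mu> \<alpha>2"
   and hF: "hom2 DC \<Phi> \<alpha>1 \<alpha>2" and hF': "hom2 DC \<Phi>' \<alpha>1' \<alpha>2'"
   and wq: "whiskL DC \<mu> \<Phi> = whiskR DC \<Phi>' \<epsilon>"
   and hd1: "hom1 DC \<delta>1 (NTgt \<epsilon>) (NSrc \<mu>)" and d1e: "nat_comp C D \<delta>1 \<epsilon> = \<alpha>1" and d1m: "nat_comp C D \<mu> \<delta>1 = \<alpha>1'"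
   and hd2: "hom1 DC \<delta>2 (NTgt \<epsilon>) (NSrc \<mu>)" and d2e: "nat_comp C D \<delta>2 \<epsilon> = \<alpha>2" and d2m: "nat_comp C D \<mu> \<delta>2 = \<alpha>2'"
begin

lemma ne3: "two_nat C D \<epsilon>" using pwD(1)[OF eE] .
lemma nm3: "two_nat C D \<mu>" using pwD(1)[OF mM] .
lemma nd: "two_nat C D \<delta>1" "NSrc \<delta>1 = NTgt \<epsilon>" "NTgt \<delta>1 = NSrc \<mu>"
   "two_nat C D \<delta>2" "NSrc \<delta>2 = NTgt \<epsilon>" "NTgt \<delta>2 = NSrc \<mu>" using hd1 hd2 by (auto simp: hom1_DC)
lemma nal: "NSrc \<alpha>1 = NSrc \<epsilon>" "NTgt \<alpha>1 = NSrc \<mu>" using ha1 by (auto simp: hom1_DC)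
lemma mF: "modification C D \<Phi>" "MSrc \<Phi> = \<alpha>1" "MTgt \<Phi> = \<alpha>2" using hF by (auto simp: hom2_DC)
lemma mF': "modification C D \<Phi>'" "MSrc \<Phi>' = \<alpha>1'" "MTgt \<Phi>' = \<alpha>2'" using hF' by (auto simp: hom2_DC)

lemma Fs3: "two_functor C D (NSrc \<epsilon>)" "two_functor C D (NTgt \<epsilon>)"
   "two_functor C D (NSrc \<mu>)" "two_functor C D (NTgt \<mu>)"
  using nS[OF ne3] nT[OF ne3] nS[OF nm3] nT[OF nm3] by auto

definition "Qc X \<Delta> \<longleftrightarrow> hom2 D \<Delta> (NCmp \<delta>1 X) (NCmp \<delta>2 X) \<and> whiskR D \<Delta> (NCmp \<epsilon> X) = MCmp \<Phi> X \<and>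
    whiskL D (NCmp \<mu> X) \<Delta> = MCmp \<Phi>' X"

definition "DD X = (THE \<Delta>. Qc X \<Delta>)"

lemma Qc_ex1: assumes X: "X \<in> Obj C" shows "\<exists>!\<Delta>. Qc X \<Delta>"
proof -
  have eX: "hom1 D (NCmp \<epsilon> X) (FO (NSrc \<epsilon>) X) (FO (NTgt \<epsilon>) X)" "NCmp \<epsilon> X \<in> E"
    using nH[OF ne3 X] pwD(2)[OF eE X] by auto
  have mX: "hom1 D (NCmp \<mu> X) (FO (NSrc \<mu>) X) (FO (NTgt \<mu>) X)" "NCmp \<mu> X \<in> M"
    using nH[OF nm3 X] pwD(2)[OF mM X] by auto
  have dc: "Dom D (NCmp \<epsilon> X) = FO (NSrc \<epsilon>) X" "Cod D (NCmp \<epsilon> X) = FO (NTgt \<epsilon>) X"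
    "Dom D (NCmp \<mu> X) = FO (NSrc \<mu>) X" "Cod D (NCmp \<mu> X) = FO (NTgt \<mu>) X"
    using eX mX by (auto simp: hom1_def)
  have h: "hom1 D (NCmp a X) (FO (NSrc \<epsilon>) X) (FO (NSrc \<mu>) X)" if "hom1 DC a (NSrc \<epsilon>) (NSrc \<mu>)" for a
    using that nH[of a X] X by (auto simp: hom1_DC)
  have h': "hom1 D (NCmp a X) (FO (NTgt \<epsilon>) X) (FO (NTgt \<mu>) X)" if "hom1 DC a (NTgt \<epsilon>) (NTgt \<mu>)" for a
    using that nH[of a X] X by (auto simp: hom1_DC)
  have hd: "hom1 D (NCmp a X) (FO (NTgt \<epsilon>) X) (FO (NSrc \<mu>) X)" if "hom1 DC a (NTgt \<epsilon>) (NSrc \<mu>)" for a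
    using that nH[of a X] X by (auto simp: hom1_DC)
  have c: "NCmp (nat_comp C D a b) X = Comp D (NCmp a X) (NCmp b X)" for a b using X by simp
  have w: "whiskL D (NCmp \<mu> X) (MCmp \<Phi> X) = whiskR D (MCmp \<Phi>' X) (NCmp \<epsilon> X)"
    using arg_cong[OF wq, of "\<lambda>r. MCmp r X"] X by (simp add: wL_DC wR_DC)
  show ?thesis unfolding Qc_def
  proof (rule lift_iii[OF eX(2) mX(2)])
    show "hom1 D (NCmp \<alpha>1 X) (Dom D (NCmp \<epsilon> X)) (Dom D (NCmp \<mu> X))" using h[OF ha1] dc by simp
    show "hom1 D (NCmp \<alpha>2 X) (Dom D (NCmp \<epsilon> X)) (Dom D (NCmp \<mu> X))" using h[OF ha2] dc by simp
    show "hom1 D (NCmp \<alpha>1' X) (Cod D (NCmp \<epsilon> X)) (Cod D (NCmp \<mu> X))" using h'[OF ha1'] dc by simp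
    show "hom1 D (NCmp \<alpha>2' X) (Cod D (NCmp \<epsilon> X)) (Cod D (NCmp \<mu> X))" using h'[OF ha2'] dc by simp
    show "Comp D (NCmp \<alpha>1' X) (NCmp \<epsilon> X) = Comp D (NCmp \<mu> X) (NCmp \<alpha>1 X)" using c[of \<alpha>1' \<epsilon>] c[of \<mu> \<alpha>1] sq1 by simp
    show "Comp D (NCmp \<alpha>2' X) (NCmp \<epsilon> X) = Comp D (NCmp \<mu> X) (NCmp \<alpha>2 X)" using c[of \<alpha>2' \<epsilon>] c[of \<mu> \<alpha>2] sq2 by simp
    show "hom2 D (MCmp \<Phi> X) (NCmp \<alpha>1 X) (NCmp \<alpha>2 X)" using mH[OF mF(1) X] mF by simp
    show "hom2 D (MCmp \<Phi>' X) (NCmp \<alpha>1' X) (NCmp \<alpha>2' X)" using mH[OF mF'(1) X] mF' by simp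
    show "whiskL D (NCmp \<mu> X) (MCmp \<Phi> X) = whiskR D (MCmp \<Phi>' X) (NCmp \<epsilon> X)" by (rule w)
    show "hom1 D (NCmp \<delta>1 X) (Cod D (NCmp \<epsilon> X)) (Dom D (NCmp \<mu> X))" using hd[OF hd1] dc by simp
    show "hom1 D (NCmp \<delta>2 X) (Cod D (NCmp \<epsilon> X)) (Dom D (NCmp \<mu> X))" using hd[OF hd2] dc by simp
    show "Comp D (NCmp \<delta>1 X) (NCmp \<epsilon> X) = NCmp \<alpha>1 X" using c[of \<delta>1 \<epsilon>] d1e by simp
    show "Comp D (NCmp \<delta>2 X) (NCmp \<epsilon> X) = NCmp \<alpha>2 X" using c[of \<delta>2 \<epsilon>] d2e by simp
    show "Comp D (NCmp \<mu> X) (NCmp \<delta>1 X) = NCmp \<alpha>1' X" using c[of \<mu> \<delta>1] d1m by simp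
    show "Comp D (NCmp \<mu> X) (NCmp \<delta>2 X) = NCmp \<alpha>2' X" using c[of \<mu> \<delta>2] d2m by simp
  qed
qed

lemma DDP: "X \<in> Obj C \<Longrightarrow> Qc X (DD X)"
  unfolding DD_def by (rule theI', rule Qc_ex1)

lemma DDU: "X \<in> Obj C \<Longrightarrow> Qc X \<Delta> \<Longrightarrow> \<Delta> = DD X"
  using Qc_ex1 DDP by blast

definition "\<Delta>0 = \<lparr> MSrc = \<delta>1, MTgt = \<delta>2, MCmp = (\<lambda>X. if X \<in> Obj C then DD X else undefined) \<rparr>"

lemma \<Delta>0_mod: "modification C D \<Delta>0"
  unfolding modification_def
proof (intro conjI ballI allI impI)
  show "two_nat C D (MSrc \<Delta>0)" "two_nat C D (MTgt \<Delta>0)" using nd by (simp_all add: \<Delta>0_def)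
  show "NSrc (MSrc \<Delta>0) = NSrc (MTgt \<Delta>0)" "NTgt (MSrc \<Delta>0) = NTgt (MTgt \<Delta>0)" using nd by (simp_all add: \<Delta>0_def)
  show "MCmp \<Delta>0 X = undefined" if "X \<notin> Obj C" for X using that by (simp add: \<Delta>0_def)
  show "hom2 D (MCmp \<Delta>0 X) (NCmp (MSrc \<Delta>0) X) (NCmp (MTgt \<Delta>0) X)" if "X \<in> Obj C" for X
    using DDP[OF that] that by (simp add: \<Delta>0_def Qc_def)
next
  fix f assume f: "f \<in> Arr C"
  let ?X = "Dom C f" and ?Y = "Cod C f"
  have X: "?X \<in> Obj C" and Y: "?Y \<in> Obj C" using Cobj[OF f] by auto
  have hf: "hom1 C f ?X ?Y" using f by (simp add: hom1_def)
  let ?F = "NSrc \<epsilon>" and ?F' = "NTgt \<epsilon>" and ?G = "NSrc \<mu>"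
  have Ff: "hom1 D (FA ?F f) (FO ?F ?X) (FO ?F ?Y)" by (rule fA'[OF Fs3(1) hf])
  have F'f: "hom1 D (FA ?F' f) (FO ?F' ?X) (FO ?F' ?Y)" by (rule fA'[OF Fs3(2) hf])
  have Gf: "hom1 D (FA ?G f) (FO ?G ?X) (FO ?G ?Y)" by (rule fA'[OF Fs3(3) hf])
  have eX: "hom1 D (NCmp \<epsilon> ?X) (FO ?F ?X) (FO ?F' ?X)" "NCmp \<epsilon> ?X \<in> E"
    using nH[OF ne3 X] pwD(2)[OF eE X] by auto
  have eY: "hom1 D (NCmp \<epsilon> ?Y) (FO ?F ?Y) (FO ?F' ?Y)" using nH[OF ne3 Y] by auto
  have d1X: "hom1 D (NCmp \<delta>1 ?X) (FO ?F' ?X) (FO ?G ?X)" using nH[OF nd(1) X] nd by simp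
  have d2X: "hom1 D (NCmp \<delta>2 ?X) (FO ?F' ?X) (FO ?G ?X)" using nH[OF nd(4) X] nd by simp
  have d1Y: "hom1 D (NCmp \<delta>1 ?Y) (FO ?F' ?Y) (FO ?G ?Y)" using nH[OF nd(1) Y] nd by simp
  have d2Y: "hom1 D (NCmp \<delta>2 ?Y) (FO ?F' ?Y) (FO ?G ?Y)" using nH[OF nd(4) Y] nd by simp
  have QX: "Qc ?X (DD ?X)" and QY: "Qc ?Y (DD ?Y)" using DDP X Y by auto
  have DX: "hom2 D (DD ?X) (NCmp \<delta>1 ?X) (NCmp \<delta>2 ?X)" using QX by (simp add: Qc_def)
  have DY: "hom2 D (DD ?Y) (NCmp \<delta>1 ?Y) (NCmp \<delta>2 ?Y)" using QY by (simp add: Qc_def)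
  have F'f': "hom1 D (FA ?F' f) (FO ?F' ?X) (Dom D (NCmp \<delta>1 ?Y))" using F'f d1Y by (simp add: hom1_def)
  have Gf': "hom1 D (FA ?G f) (Cod D (NCmp \<delta>1 ?X)) (FO ?G ?Y)" using Gf d1X by (simp add: hom1_def)
  have eX': "hom1 D (NCmp \<epsilon> ?X) (FO ?F ?X) (Dom D (NCmp \<delta>1 ?X))" using eX d1X by (simp add: hom1_def)
  have eY': "hom1 D (NCmp \<epsilon> ?Y) (FO ?F ?Y) (Dom D (NCmp \<delta>1 ?Y))" using eY d1Y by (simp add: hom1_def)
  have n1: "Comp D (FA ?G f) (NCmp \<delta>1 ?X) = Comp D (NCmp \<delta>1 ?Y) (FA ?F' f)" using nN'[OF nd(1) hf] nd by simp
  have n2: "Comp D (FA ?G f) (NCmp \<delta>2 ?X) = Comp D (NCmp \<delta>2 ?Y) (FA ?F' f)" using nN'[OF nd(4) hf] nd by simp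
  have natE: "Comp D (FA ?F' f) (NCmp \<epsilon> ?X) = Comp D (NCmp \<epsilon> ?Y) (FA ?F f)" by (rule nN'[OF ne3 hf])
  have h1: "hom2 D (whiskR D (DD ?Y) (FA ?F' f)) (Comp D (NCmp \<delta>1 ?Y) (FA ?F' f)) (Comp D (NCmp \<delta>2 ?Y) (FA ?F' f))"
    by (rule D.wR_hom[OF DY F'f'])
  have h2: "hom2 D (whiskL D (FA ?G f) (DD ?X)) (Comp D (NCmp \<delta>1 ?Y) (FA ?F' f)) (Comp D (NCmp \<delta>2 ?Y) (FA ?F' f))"
    using D.wL_hom[OF DX Gf'] n1 n2 by simp
  have "whiskR D (whiskR D (DD ?Y) (FA ?F' f)) (NCmp \<epsilon> ?X) = whiskR D (DD ?Y) (Comp D (FA ?F' f) (NCmp \<epsilon> ?X))"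
    by (rule D.wR_wR[OF DY F'f' eX(1)])
  also have "\<dots> = whiskR D (DD ?Y) (Comp D (NCmp \<epsilon> ?Y) (FA ?F f))" using natE by simp
  also have "\<dots> = whiskR D (whiskR D (DD ?Y) (NCmp \<epsilon> ?Y)) (FA ?F f)" by (rule D.wR_wR[OF DY eY' Ff, symmetric])
  also have "\<dots> = whiskR D (MCmp \<Phi> ?Y) (FA ?F f)" using QY by (simp add: Qc_def)
  also have "\<dots> = whiskL D (FA ?G f) (MCmp \<Phi> ?X)" using mN'[OF mF(1) hf] mF nal by simp
  also have "\<dots> = whiskL D (FA ?G f) (whiskR D (DD ?X) (NCmp \<epsilon> ?X))" using QX by (simp add: Qc_def)
  also have "\<dots> = whiskR D (whiskL D (FA ?G f) (DD ?X)) (NCmp \<epsilon> ?X)" by (rule D.wL_wR[OF DX eX' Gf'])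
  finally have eq: "whiskR D (whiskR D (DD ?Y) (FA ?F' f)) (NCmp \<epsilon> ?X) = whiskR D (whiskL D (FA ?G f) (DD ?X)) (NCmp \<epsilon> ?X)" .
  have "whiskR D (DD ?Y) (FA ?F' f) = whiskL D (FA ?G f) (DD ?X)"
    by (rule epi_cancel[OF eX(2) h1 h2 _ eq]) (use D.comp_hom[OF F'f d1Y] eX(1) in \<open>simp add: hom1_def\<close>)
  then show "whiskR D (MCmp \<Delta>0 (Cod C f)) (FA (NSrc (MSrc \<Delta>0)) f) = whiskL D (FA (NTgt (MSrc \<Delta>0)) f) (MCmp \<Delta>0 (Dom C f))"
    using X Y nd by (simp add: \<Delta>0_def)
qed

lemma main_iii: "\<exists>!\<Delta>. hom2 DC \<Delta> \<delta>1 \<delta>2 \<and> whiskR DC \<Delta> \<epsilon> = \<Phi> \<and> whiskL DC \<mu> \<Delta> = \<Phi>'"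
proof (rule ex1I[of _ \<Delta>0])
  show "hom2 DC \<Delta>0 \<delta>1 \<delta>2 \<and> whiskR DC \<Delta>0 \<epsilon> = \<Phi> \<and> whiskL DC \<mu> \<Delta>0 = \<Phi>'"
  proof (intro conjI)
    show "hom2 DC \<Delta>0 \<delta>1 \<delta>2" using \<Delta>0_mod by (simp add: hom2_DC \<Delta>0_def)
    show "whiskR DC \<Delta>0 \<epsilon> = \<Phi>"
    proof (rule tmod.equality)
      show "MCmp (whiskR DC \<Delta>0 \<epsilon>) = MCmp \<Phi>"
      proof
        fix X show "MCmp (whiskR DC \<Delta>0 \<epsilon>) X = MCmp \<Phi> X"
          by (cases "X \<in> Obj C") (use DDP mU[OF mF(1)] in \<open>simp_all add: wR_DC \<Delta>0_def Qc_def\<close>)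
      qed
    qed (use mF d1e d2e in \<open>simp_all add: wR_DC \<Delta>0_def\<close>)
    show "whiskL DC \<mu> \<Delta>0 = \<Phi>'"
    proof (rule tmod.equality)
      show "MCmp (whiskL DC \<mu> \<Delta>0) = MCmp \<Phi>'"
      proof
        fix X show "MCmp (whiskL DC \<mu> \<Delta>0) X = MCmp \<Phi>' X"
          by (cases "X \<in> Obj C") (use DDP mU[OF mF'(1)] in \<open>simp_all add: wL_DC \<Delta>0_def Qc_def\<close>)
      qed
    qed (use mF' d1m d2m in \<open>simp_all add: wL_DC \<Delta>0_def\<close>)
  qed
next
  fix \<Delta> assume S: "hom2 DC \<Delta> \<delta>1 \<delta>2 \<and> whiskR DC \<Delta> \<epsilon> = \<Phi> \<and> whiskL DC \<mu> \<Delta> = \<Phi>'"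
  have p: "modification C D \<Delta>" "MSrc \<Delta> = \<delta>1" "MTgt \<Delta> = \<delta>2" using S by (auto simp: hom2_DC)
  have q: "Qc X (MCmp \<Delta> X)" if X: "X \<in> Obj C" for X
  proof -
    have "whiskR D (MCmp \<Delta> X) (NCmp \<epsilon> X) = MCmp \<Phi> X"
      using arg_cong[of _ _ "\<lambda>r. MCmp r X", OF conjunct1[OF conjunct2[OF S]]] X by (simp add: wR_DC)
    moreover have "whiskL D (NCmp \<mu> X) (MCmp \<Delta> X) = MCmp \<Phi>' X"
      using arg_cong[of _ _ "\<lambda>r. MCmp r X", OF conjunct2[OF conjunct2[OF S]]] X by (simp add: wL_DC)
    ultimately show ?thesis using mH[OF p(1) X] p unfolding Qc_def by simp
  qed
  show "\<Delta> = \<Delta>0"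
    by (rule mod_eqI[OF p(1) \<Delta>0_mod]) (use p DDU q in \<open>simp_all add: \<Delta>0_def\<close>)
qed

end
end



context P28 begin

lemma Ccell: "\<phi> \<in> Cell C \<Longrightarrow> hom2 C \<phi> (Src C \<phi>) (Tgt C \<phi>) \<and>
   hom1 C (Src C \<phi>) (Dom C (Src C \<phi>)) (Cod C (Src C \<phi>)) \<and> hom1 C (Tgt C \<phi>) (Dom C (Src C \<phi>)) (Cod C (Src C \<phi>))"
  using C.cell[of \<phi> "Src C \<phi>" "Tgt C \<phi>"] by (auto simp: hom1_def hom2_def)

lemma hom1_obj: "hom1 C f X Y \<Longrightarrow> X \<in> Obj C \<and> Y \<in> Obj C"
  using C.arr_dc by (auto simp: hom1_def)

context
  fixes \<alpha> assumes N: "two_nat C D \<alpha>"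
begin

definition "em X = (SOME p. fst p \<in> E \<and> snd p \<in> M \<and> Cod D (fst p) = Dom D (snd p) \<and> NCmp \<alpha> X = Comp D (snd p) (fst p))"
definition "ee X = fst (em X)"
definition "mm X = snd (em X)"
definition "HO X = (if X \<in> Obj C then Cod D (ee X) else undefined)"

lemma FG: "two_functor C D (NSrc \<alpha>)" "two_functor C D (NTgt \<alpha>)" using nS[OF N] nT[OF N] by auto

context fixes X assumes X: "X \<in> Obj C" begin
lemma emP: "ee X \<in> E" "mm X \<in> M" "Cod D (ee X) = Dom D (mm X)" "NCmp \<alpha> X = Comp D (mm X) (ee X)"
proof -
  have "NCmp \<alpha> X \<in> Arr D" using nH[OF N X] by (simp add: hom1_def)
  then have "\<exists>p. fst p \<in> E \<and> snd p \<in> M \<and> Cod D (fst p) = Dom D (snd p) \<and> NCmp \<alpha> X = Comp D (snd p) (fst p)"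
    using fact_i by fastforce
  then have "fst (em X) \<in> E \<and> snd (em X) \<in> M \<and> Cod D (fst (em X)) = Dom D (snd (em X)) \<and> NCmp \<alpha> X = Comp D (snd (em X)) (fst (em X))"
    unfolding em_def by (rule someI_ex)
  then show "ee X \<in> E" "mm X \<in> M" "Cod D (ee X) = Dom D (mm X)" "NCmp \<alpha> X = Comp D (mm X) (ee X)"
    unfolding ee_def mm_def by auto
qed

lemma emH: "hom1 D (ee X) (FO (NSrc \<alpha>) X) (HO X)" "hom1 D (mm X) (HO X) (FO (NTgt \<alpha>) X)"
   "HO X \<in> Obj D"
proof -
  have e: "hom1 D (ee X) (Dom D (ee X)) (Cod D (ee X))" using E_arr[OF emP(1)] D.hom1I by blast
  have m: "hom1 D (mm X) (Cod D (ee X)) (Cod D (mm X))" using M_arr[OF emP(2)] D.hom1I emP(3) by metis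
  have "hom1 D (Comp D (mm X) (ee X)) (Dom D (ee X)) (Cod D (mm X))" by (rule D.comp_hom[OF e m])
  moreover have "hom1 D (Comp D (mm X) (ee X)) (FO (NSrc \<alpha>) X) (FO (NTgt \<alpha>) X)" using nH[OF N X] emP(4) by simp
  ultimately have "Dom D (ee X) = FO (NSrc \<alpha>) X" "Cod D (mm X) = FO (NTgt \<alpha>) X" by (auto simp: hom1_def)
  then show "hom1 D (ee X) (FO (NSrc \<alpha>) X) (HO X)" "hom1 D (mm X) (HO X) (FO (NTgt \<alpha>) X)"
    using e m X by (auto simp: HO_def)
  show "HO X \<in> Obj D" using D.arr_dc[OF E_arr[OF emP(1)]] X by (simp add: HO_def)
qed

lemma emdc: "Dom D (ee X) = FO (NSrc \<alpha>) X" "Cod D (ee X) = HO X" "Dom D (mm X) = HO X" "Cod D (mm X) = FO (NTgt \<alpha>) X"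
  using emH by (auto simp: hom1_def)
end

definition "Qa f \<delta> \<longleftrightarrow> hom1 D \<delta> (HO (Dom C f)) (HO (Cod C f)) \<and>
    Comp D \<delta> (ee (Dom C f)) = Comp D (ee (Cod C f)) (FA (NSrc \<alpha>) f) \<and>
    Comp D (mm (Cod C f)) \<delta> = Comp D (FA (NTgt \<alpha>) f) (mm (Dom C f))"

definition "HA f = (if f \<in> Arr C then (THE \<delta>. Qa f \<delta>) else undefined)"

lemma Qa_ex1: assumes f: "f \<in> Arr C" shows "\<exists>!\<delta>. Qa f \<delta>"
proof -
  let ?X = "Dom C f" and ?Y = "Cod C f"
  have X: "?X \<in> Obj C" and Y: "?Y \<in> Obj C" using Cobj[OF f] by auto
  have hf: "hom1 C f ?X ?Y" using f by (simp add: hom1_def)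
  have Ff: "hom1 D (FA (NSrc \<alpha>) f) (FO (NSrc \<alpha>) ?X) (FO (NSrc \<alpha>) ?Y)" by (rule fA'[OF FG(1) hf])
  have Gf: "hom1 D (FA (NTgt \<alpha>) f) (FO (NTgt \<alpha>) ?X) (FO (NTgt \<alpha>) ?Y)" by (rule fA'[OF FG(2) hf])
  note eX = emH(1)[OF X] and mX = emH(2)[OF X] and eY = emH(1)[OF Y] and mY = emH(2)[OF Y]
  have sq: "Comp D (Comp D (FA (NTgt \<alpha>) f) (mm ?X)) (ee ?X) = Comp D (mm ?Y) (Comp D (ee ?Y) (FA (NSrc \<alpha>) f))"
  proof -
    have "Comp D (Comp D (FA (NTgt \<alpha>) f) (mm ?X)) (ee ?X) = Comp D (FA (NTgt \<alpha>) f) (Comp D (mm ?X) (ee ?X))"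
      by (rule D.assoc[OF eX mX Gf, symmetric])
    also have "\<dots> = Comp D (FA (NTgt \<alpha>) f) (NCmp \<alpha> ?X)" using emP(4)[OF X] by simp
    also have "\<dots> = Comp D (NCmp \<alpha> ?Y) (FA (NSrc \<alpha>) f)" by (rule nN'[OF N hf])
    also have "\<dots> = Comp D (Comp D (mm ?Y) (ee ?Y)) (FA (NSrc \<alpha>) f)" using emP(4)[OF Y] by simp
    also have "\<dots> = Comp D (mm ?Y) (Comp D (ee ?Y) (FA (NSrc \<alpha>) f))" by (rule D.assoc[OF Ff eY mY, symmetric])
    finally show ?thesis .
  qed
  have "\<exists>!\<delta>. hom1 D \<delta> (Cod D (ee ?X)) (Dom D (mm ?Y)) \<and> Comp D \<delta> (ee ?X) = Comp D (ee ?Y) (FA (NSrc \<alpha>) f) \<and>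
         Comp D (mm ?Y) \<delta> = Comp D (FA (NTgt \<alpha>) f) (mm ?X)"
    by (rule strict_lift[OF emP(1)[OF X] emP(2)[OF Y] _ _ sq])
       (use D.comp_hom[OF Ff eY] D.comp_hom[OF mX Gf] emdc[OF X] emdc[OF Y] in simp_all)
  then show ?thesis unfolding Qa_def using emdc[OF X] emdc[OF Y] by simp
qed

lemma HAP: "f \<in> Arr C \<Longrightarrow> Qa f (HA f)"
  unfolding HA_def using theI'[OF Qa_ex1] by simp

lemma HAU: "f \<in> Arr C \<Longrightarrow> Qa f \<delta> \<Longrightarrow> HA f = \<delta>"
  using Qa_ex1 HAP by blast

lemma HAH: "hom1 C f X Y \<Longrightarrow> hom1 D (HA f) (HO X) (HO Y)"
  using HAP[of f] by (auto simp: hom1_def Qa_def)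

lemma HAe: "hom1 C f X Y \<Longrightarrow> Comp D (HA f) (ee X) = Comp D (ee Y) (FA (NSrc \<alpha>) f)"
  using HAP[of f] by (auto simp: hom1_def Qa_def)

lemma HAm: "hom1 C f X Y \<Longrightarrow> Comp D (mm Y) (HA f) = Comp D (FA (NTgt \<alpha>) f) (mm X)"
  using HAP[of f] by (auto simp: hom1_def Qa_def)

definition "Qb \<phi> \<Delta> \<longleftrightarrow> hom2 D \<Delta> (HA (Src C \<phi>)) (HA (Tgt C \<phi>)) \<and>
    whiskR D \<Delta> (ee (Dom C (Src C \<phi>))) = whiskL D (ee (Cod C (Src C \<phi>))) (FC (NSrc \<alpha>) \<phi>) \<and>
    whiskL D (mm (Cod C (Src C \<phi>))) \<Delta> = whiskR D (FC (NTgt \<alpha>) \<phi>) (mm (Dom C (Src C \<phi>)))"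

definition "HC \<phi> = (if \<phi> \<in> Cell C then (THE \<Delta>. Qb \<phi> \<Delta>) else undefined)"

lemma Qb_ex1: assumes p: "\<phi> \<in> Cell C" shows "\<exists>!\<Delta>. Qb \<phi> \<Delta>"
proof -
  let ?f = "Src C \<phi>" and ?g = "Tgt C \<phi>"
  let ?X = "Dom C ?f" and ?Y = "Cod C ?f"
  have hp: "hom2 C \<phi> ?f ?g" and hf: "hom1 C ?f ?X ?Y" and hg: "hom1 C ?g ?X ?Y" using Ccell[OF p] by auto
  have X: "?X \<in> Obj C" and Y: "?Y \<in> Obj C" using hom1_obj[OF hf] by auto
  let ?F = "NSrc \<alpha>" and ?G = "NTgt \<alpha>"
  have Ff: "hom1 D (FA ?F ?f) (FO ?F ?X) (FO ?F ?Y)" by (rule fA'[OF FG(1) hf])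
  have Gf: "hom1 D (FA ?G ?f) (FO ?G ?X) (FO ?G ?Y)" by (rule fA'[OF FG(2) hf])
  have Fg: "hom1 D (FA ?F ?g) (FO ?F ?X) (FO ?F ?Y)" by (rule fA'[OF FG(1) hg])
  have Gg: "hom1 D (FA ?G ?g) (FO ?G ?X) (FO ?G ?Y)" by (rule fA'[OF FG(2) hg])
  have Fp: "hom2 D (FC ?F \<phi>) (FA ?F ?f) (FA ?F ?g)" by (rule fC'[OF FG(1) hp])
  have Gp: "hom2 D (FC ?G \<phi>) (FA ?G ?f) (FA ?G ?g)" by (rule fC'[OF FG(2) hp])
  note eX = emH(1)[OF X] and mX = emH(2)[OF X] and eY = emH(1)[OF Y] and mY = emH(2)[OF Y]
  note dcX = emdc[OF X] and dcY = emdc[OF Y]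
  have sqf: "Comp D (Comp D (FA ?G ?f) (mm ?X)) (ee ?X) = Comp D (mm ?Y) (Comp D (ee ?Y) (FA ?F ?f))"
    using D.assoc[OF eX mX Gf] D.assoc[OF Ff eY mY] emP(4)[OF X] emP(4)[OF Y] nN'[OF N hf] by simp
  have sqg: "Comp D (Comp D (FA ?G ?g) (mm ?X)) (ee ?X) = Comp D (mm ?Y) (Comp D (ee ?Y) (FA ?F ?g))"
    using D.assoc[OF eX mX Gg] D.assoc[OF Fg eY mY] emP(4)[OF X] emP(4)[OF Y] nN'[OF N hg] by simp
  have Ff': "hom1 D (FA ?F ?f) (FO ?F ?X) (Dom D (ee ?Y))" using Ff dcY by simp
  have eY': "hom1 D (ee ?Y) (Cod D (FA ?F ?f)) (HO ?Y)" using eY Ff by (simp add: hom1_def)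
  have mX': "hom1 D (mm ?X) (HO ?X) (Dom D (FA ?G ?f))" using mX Gf by (simp add: hom1_def)
  have aY: "NCmp \<alpha> ?Y = Comp D (mm ?Y) (ee ?Y)" by (rule emP(4)[OF Y])
  have aX: "NCmp \<alpha> ?X = Comp D (mm ?X) (ee ?X)" by (rule emP(4)[OF X])
  have w: "whiskL D (mm ?Y) (whiskL D (ee ?Y) (FC ?F \<phi>)) = whiskR D (whiskR D (FC ?G \<phi>) (mm ?X)) (ee ?X)"
  proof -
    have "whiskL D (mm ?Y) (whiskL D (ee ?Y) (FC ?F \<phi>)) = whiskL D (Comp D (mm ?Y) (ee ?Y)) (FC ?F \<phi>)"
      by (rule D.wL_wL[OF Fp eY' mY])
    also have "\<dots> = whiskR D (FC ?G \<phi>) (NCmp \<alpha> ?X)" using n2'[OF N hp hf] aY by simp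
    also have "\<dots> = whiskR D (whiskR D (FC ?G \<phi>) (mm ?X)) (ee ?X)"
      using D.wR_wR[OF Gp mX'] eX dcX aX by (simp add: hom1_def)
    finally show ?thesis .
  qed
  have "\<exists>!\<Delta>. hom2 D \<Delta> (HA ?f) (HA ?g) \<and> whiskR D \<Delta> (ee ?X) = whiskL D (ee ?Y) (FC ?F \<phi>) \<and>
      whiskL D (mm ?Y) \<Delta> = whiskR D (FC ?G \<phi>) (mm ?X)"
  proof (rule lift_iii[OF emP(1)[OF X] emP(2)[OF Y] _ _ _ _ sqf sqg _ _ w])
    show "hom1 D (Comp D (ee ?Y) (FA ?F ?f)) (Dom D (ee ?X)) (Dom D (mm ?Y))" using D.comp_hom[OF Ff eY] dcX dcY by simp
    show "hom1 D (Comp D (ee ?Y) (FA ?F ?g)) (Dom D (ee ?X)) (Dom D (mm ?Y))" using D.comp_hom[OF Fg eY] dcX dcY by simp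
    show "hom1 D (Comp D (FA ?G ?f) (mm ?X)) (Cod D (ee ?X)) (Cod D (mm ?Y))" using D.comp_hom[OF mX Gf] dcX dcY by simp
    show "hom1 D (Comp D (FA ?G ?g) (mm ?X)) (Cod D (ee ?X)) (Cod D (mm ?Y))" using D.comp_hom[OF mX Gg] dcX dcY by simp
    show "hom2 D (whiskL D (ee ?Y) (FC ?F \<phi>)) (Comp D (ee ?Y) (FA ?F ?f)) (Comp D (ee ?Y) (FA ?F ?g))"
      by (rule D.wL_hom[OF Fp eY'])
    show "hom2 D (whiskR D (FC ?G \<phi>) (mm ?X)) (Comp D (FA ?G ?f) (mm ?X)) (Comp D (FA ?G ?g) (mm ?X))"
      by (rule D.wR_hom[OF Gp mX'])
    show "hom1 D (HA ?f) (Cod D (ee ?X)) (Dom D (mm ?Y))" using HAH[OF hf] dcX dcY by simp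
    show "hom1 D (HA ?g) (Cod D (ee ?X)) (Dom D (mm ?Y))" using HAH[OF hg] dcX dcY by simp
    show "Comp D (HA ?f) (ee ?X) = Comp D (ee ?Y) (FA ?F ?f)" by (rule HAe[OF hf])
    show "Comp D (HA ?g) (ee ?X) = Comp D (ee ?Y) (FA ?F ?g)" by (rule HAe[OF hg])
    show "Comp D (mm ?Y) (HA ?f) = Comp D (FA ?G ?f) (mm ?X)" by (rule HAm[OF hf])
    show "Comp D (mm ?Y) (HA ?g) = Comp D (FA ?G ?g) (mm ?X)" by (rule HAm[OF hg])
  qed
  then show ?thesis unfolding Qb_def .
qed

lemma HCP: "\<phi> \<in> Cell C \<Longrightarrow> Qb \<phi> (HC \<phi>)"
  unfolding HC_def using theI'[OF Qb_ex1] by simp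

lemma HCU: "\<phi> \<in> Cell C \<Longrightarrow> Qb \<phi> \<Delta> \<Longrightarrow> HC \<phi> = \<Delta>"
  using Qb_ex1 HCP by blast

lemma HCH: "hom2 C \<phi> f g \<Longrightarrow> hom1 C f X Y \<Longrightarrow>
  hom2 D (HC \<phi>) (HA f) (HA g) \<and> whiskR D (HC \<phi>) (ee X) = whiskL D (ee Y) (FC (NSrc \<alpha>) \<phi>) \<and>
    whiskL D (mm Y) (HC \<phi>) = whiskR D (FC (NTgt \<alpha>) \<phi>) (mm X)"
  using HCP[of \<phi>] by (auto simp: hom1_def hom2_def Qb_def)


definition "Hf = \<lparr> FO = HO, FA = HA, FC = HC \<rparr>"

lemma H_fun: "two_functor C D Hf"
  unfolding two_functor_def
proof (intro conjI ballI allI impI)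
  let ?F = "NSrc \<alpha>" and ?G = "NTgt \<alpha>"
  show "FO Hf X = undefined" if "X \<notin> Obj C" for X using that by (simp add: Hf_def HO_def)
  show "FA Hf f = undefined" if "f \<notin> Arr C" for f using that by (simp add: Hf_def HA_def)
  show "FC Hf \<phi> = undefined" if "\<phi> \<notin> Cell C" for \<phi> using that by (simp add: Hf_def HC_def)
  show "FO Hf X \<in> Obj D" if "X \<in> Obj C" for X using emH(3)[OF that] by (simp add: Hf_def)
  show "hom1 D (FA Hf f) (FO Hf (Dom C f)) (FO Hf (Cod C f))" if "f \<in> Arr C" for f
    using HAH[of f "Dom C f" "Cod C f"] that by (simp add: Hf_def hom1_def)
  show "FA Hf (Id1 C X) = Id1 D (FO Hf X)" if X: "X \<in> Obj C" for X
  proof -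
    have hi: "hom1 C (Id1 C X) X X" by (rule C.id1_hom[OF X])
    have i: "hom1 D (Id1 D (HO X)) (HO X) (HO X)" by (rule D.id1_hom[OF emH(3)[OF X]])
    have "Qa (Id1 C X) (Id1 D (HO X))" unfolding Qa_def
      using hi i D.idl[OF emH(1)[OF X]] D.idr[OF emH(1)[OF X]] D.idl[OF emH(2)[OF X]] D.idr[OF emH(2)[OF X]]
        fId1[OF FG(1) X] fId1[OF FG(2) X] by (simp add: hom1_def)
    then show ?thesis using HAU[OF C.hom1_arr[OF hi]] hi by (simp add: Hf_def)
  qed
  show "FA Hf (Comp C g f) = Comp D (FA Hf g) (FA Hf f)"
    if f: "f \<in> Arr C" and g: "g \<in> Arr C" and fg: "Cod C f = Dom C g" for f g
  proof -
    let ?X = "Dom C f" and ?Y = "Cod C f" and ?Z = "Cod C g"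
    have hf: "hom1 C f ?X ?Y" and hg: "hom1 C g ?Y ?Z" using f g fg by (auto simp: hom1_def)
    have hgf: "hom1 C (Comp C g f) ?X ?Z" by (rule C.comp_hom[OF hf hg])
    have X: "?X \<in> Obj C" and Y: "?Y \<in> Obj C" and Z: "?Z \<in> Obj C" using hom1_obj[OF hf] hom1_obj[OF hg] by auto
    have Ff: "hom1 D (FA ?F f) (FO ?F ?X) (FO ?F ?Y)" by (rule fA'[OF FG(1) hf])
    have Fg: "hom1 D (FA ?F g) (FO ?F ?Y) (FO ?F ?Z)" by (rule fA'[OF FG(1) hg])
    have Gf: "hom1 D (FA ?G f) (FO ?G ?X) (FO ?G ?Y)" by (rule fA'[OF FG(2) hf])
    have Gg: "hom1 D (FA ?G g) (FO ?G ?Y) (FO ?G ?Z)" by (rule fA'[OF FG(2) hg])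
    have Hf': "hom1 D (HA f) (HO ?X) (HO ?Y)" and Hg': "hom1 D (HA g) (HO ?Y) (HO ?Z)" using HAH hf hg by auto
    note eX = emH(1)[OF X] and eY = emH(1)[OF Y] and eZ = emH(1)[OF Z]
    note mX = emH(2)[OF X] and mY = emH(2)[OF Y] and mZ = emH(2)[OF Z]
    have "Qa (Comp C g f) (Comp D (HA g) (HA f))" unfolding Qa_def
    proof (intro conjI)
      show "hom1 D (Comp D (HA g) (HA f)) (HO (Dom C (Comp C g f))) (HO (Cod C (Comp C g f)))"
        using D.comp_hom[OF Hf' Hg'] hgf by (simp add: hom1_def)
      have "Comp D (Comp D (HA g) (HA f)) (ee ?X) = Comp D (HA g) (Comp D (HA f) (ee ?X))" by (rule D.assoc[OF eX Hf' Hg', symmetric])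
      also have "\<dots> = Comp D (HA g) (Comp D (ee ?Y) (FA ?F f))" using HAe[OF hf] by simp
      also have "\<dots> = Comp D (Comp D (HA g) (ee ?Y)) (FA ?F f)" by (rule D.assoc[OF Ff eY Hg'])
      also have "\<dots> = Comp D (Comp D (ee ?Z) (FA ?F g)) (FA ?F f)" using HAe[OF hg] by simp
      also have "\<dots> = Comp D (ee ?Z) (Comp D (FA ?F g) (FA ?F f))" by (rule D.assoc[OF Ff Fg eZ, symmetric])
      also have "\<dots> = Comp D (ee ?Z) (FA ?F (Comp C g f))" using fComp[OF FG(1) f g fg] by simp
      finally show "Comp D (Comp D (HA g) (HA f)) (ee (Dom C (Comp C g f))) = Comp D (ee (Cod C (Comp C g f))) (FA ?F (Comp C g f))"
        using hgf by (simp add: hom1_def)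
      have "Comp D (mm ?Z) (Comp D (HA g) (HA f)) = Comp D (Comp D (mm ?Z) (HA g)) (HA f)" by (rule D.assoc[OF Hf' Hg' mZ])
      also have "\<dots> = Comp D (Comp D (FA ?G g) (mm ?Y)) (HA f)" using HAm[OF hg] by simp
      also have "\<dots> = Comp D (FA ?G g) (Comp D (mm ?Y) (HA f))" by (rule D.assoc[OF Hf' mY Gg, symmetric])
      also have "\<dots> = Comp D (FA ?G g) (Comp D (FA ?G f) (mm ?X))" using HAm[OF hf] by simp
      also have "\<dots> = Comp D (Comp D (FA ?G g) (FA ?G f)) (mm ?X)" by (rule D.assoc[OF mX Gf Gg])
      also have "\<dots> = Comp D (FA ?G (Comp C g f)) (mm ?X)" using fComp[OF FG(2) f g fg] by simp
      finally show "Comp D (mm (Cod C (Comp C g f))) (Comp D (HA g) (HA f)) = Comp D (FA ?G (Comp C g f)) (mm (Dom C (Comp C g f)))"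
        using hgf by (simp add: hom1_def)
    qed
    then show ?thesis using HAU[OF C.hom1_arr[OF hgf]] by (simp add: Hf_def)
  qed
  show "hom2 D (FC Hf \<phi>) (FA Hf (Src C \<phi>)) (FA Hf (Tgt C \<phi>))" if p: "\<phi> \<in> Cell C" for \<phi>
    using HCP[OF p] by (simp add: Hf_def Qb_def)
  show "FC Hf (Id2 C f) = Id2 D (FA Hf f)" if f: "f \<in> Arr C" for f
  proof -
    let ?X = "Dom C f" and ?Y = "Cod C f"
    have hf: "hom1 C f ?X ?Y" using f by (simp add: hom1_def)
    have hi: "hom2 C (Id2 C f) f f" by (rule C.id2_hom[OF f])
    have X: "?X \<in> Obj C" and Y: "?Y \<in> Obj C" using hom1_obj[OF hf] by auto
    have Hf': "hom1 D (HA f) (HO ?X) (HO ?Y)" using HAH hf by auto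
    have Ff: "hom1 D (FA ?F f) (FO ?F ?X) (FO ?F ?Y)" by (rule fA'[OF FG(1) hf])
    have Gf: "hom1 D (FA ?G f) (FO ?G ?X) (FO ?G ?Y)" by (rule fA'[OF FG(2) hf])
    have "Qb (Id2 C f) (Id2 D (HA f))" unfolding Qb_def
      using hi D.id2_hom[OF D.hom1_arr[OF Hf']]
        D.wR_id2[OF Hf' emH(1)[OF X]] D.wL_id2[OF Ff emH(1)[OF Y]]
        D.wL_id2[OF Hf' emH(2)[OF Y]] D.wR_id2[OF Gf emH(2)[OF X]]
        fId2[OF FG(1) f] fId2[OF FG(2) f] HAe[OF hf] HAm[OF hf]
      by (simp add: hom2_def)
    then show ?thesis using HCU[of "Id2 C f"] hi by (simp add: Hf_def hom2_def)
  qed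
  show "FC Hf (VComp C \<psi> \<phi>) = VComp D (FC Hf \<psi>) (FC Hf \<phi>)"
    if p: "\<phi> \<in> Cell C" and q: "\<psi> \<in> Cell C" and pq: "Tgt C \<phi> = Src C \<psi>" for \<phi> \<psi>
  proof -
    let ?f = "Src C \<phi>" and ?g = "Tgt C \<phi>" and ?h = "Tgt C \<psi>"
    let ?X = "Dom C ?f" and ?Y = "Cod C ?f"
    have hp: "hom2 C \<phi> ?f ?g" and hf: "hom1 C ?f ?X ?Y" and hg: "hom1 C ?g ?X ?Y" using Ccell[OF p] by auto
    have hq: "hom2 C \<psi> ?g ?h" and hh: "hom1 C ?h ?X ?Y" using Ccell[OF q] pq hg by (auto simp: hom1_def)
    have hv: "hom2 C (VComp C \<psi> \<phi>) ?f ?h" by (rule C.vcomp_hom[OF hp hq])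
    have X: "?X \<in> Obj C" and Y: "?Y \<in> Obj C" using hom1_obj[OF hf] by auto
    have Pp: "hom2 D (HC \<phi>) (HA ?f) (HA ?g)" and Pq: "hom2 D (HC \<psi>) (HA ?g) (HA ?h)"
      using HCH[OF hp hf] HCH[OF hq hg] by auto
    have Hf': "hom1 D (HA ?f) (HO ?X) (HO ?Y)" using HAH hf by auto
    have Gf: "hom1 D (FA ?G ?f) (FO ?G ?X) (FO ?G ?Y)" by (rule fA'[OF FG(2) hf])
    have Ff: "hom1 D (FA ?F ?f) (FO ?F ?X) (FO ?F ?Y)" by (rule fA'[OF FG(1) hf])
    have eX': "hom1 D (ee ?X) (FO ?F ?X) (Dom D (HA ?f))" using emH(1)[OF X] Hf' by (simp add: hom1_def)
    have mY': "hom1 D (mm ?Y) (Cod D (HA ?f)) (FO ?G ?Y)" using emH(2)[OF Y] Hf' by (simp add: hom1_def)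
    have eY': "hom1 D (ee ?Y) (Cod D (FA ?F ?f)) (HO ?Y)" using emH(1)[OF Y] Ff by (simp add: hom1_def)
    have mX': "hom1 D (mm ?X) (HO ?X) (Dom D (FA ?G ?f))" using emH(2)[OF X] Gf by (simp add: hom1_def)
    have Fp: "hom2 D (FC ?F \<phi>) (FA ?F ?f) (FA ?F ?g)" by (rule fC'[OF FG(1) hp])
    have Fq: "hom2 D (FC ?F \<psi>) (FA ?F ?g) (FA ?F ?h)" by (rule fC'[OF FG(1) hq])
    have Gp: "hom2 D (FC ?G \<phi>) (FA ?G ?f) (FA ?G ?g)" by (rule fC'[OF FG(2) hp])
    have Gq: "hom2 D (FC ?G \<psi>) (FA ?G ?g) (FA ?G ?h)" by (rule fC'[OF FG(2) hq])
    have "Qb (VComp C \<psi> \<phi>) (VComp D (HC \<psi>) (HC \<phi>))" unfolding Qb_def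
    proof (intro conjI)
      show "hom2 D (VComp D (HC \<psi>) (HC \<phi>)) (HA (Src C (VComp C \<psi> \<phi>))) (HA (Tgt C (VComp C \<psi> \<phi>)))"
        using D.vcomp_hom[OF Pp Pq] hv by (simp add: hom2_def)
      have "whiskR D (VComp D (HC \<psi>) (HC \<phi>)) (ee ?X) = VComp D (whiskR D (HC \<psi>) (ee ?X)) (whiskR D (HC \<phi>) (ee ?X))"
        by (rule D.wR_vcomp[OF Pp Pq eX'])
      also have "\<dots> = VComp D (whiskL D (ee ?Y) (FC ?F \<psi>)) (whiskL D (ee ?Y) (FC ?F \<phi>))"
        using HCH[OF hp hf] HCH[OF hq hg] by simp
      also have "\<dots> = whiskL D (ee ?Y) (VComp D (FC ?F \<psi>) (FC ?F \<phi>))" by (rule D.wL_vcomp[OF Fp Fq eY', symmetric])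
      also have "\<dots> = whiskL D (ee ?Y) (FC ?F (VComp C \<psi> \<phi>))" using fV[OF FG(1) p q pq] by simp
      finally show "whiskR D (VComp D (HC \<psi>) (HC \<phi>)) (ee (Dom C (Src C (VComp C \<psi> \<phi>)))) =
          whiskL D (ee (Cod C (Src C (VComp C \<psi> \<phi>)))) (FC ?F (VComp C \<psi> \<phi>))" using hv by (simp add: hom2_def)
      have "whiskL D (mm ?Y) (VComp D (HC \<psi>) (HC \<phi>)) = VComp D (whiskL D (mm ?Y) (HC \<psi>)) (whiskL D (mm ?Y) (HC \<phi>))"
        by (rule D.wL_vcomp[OF Pp Pq mY'])
      also have "\<dots> = VComp D (whiskR D (FC ?G \<psi>) (mm ?X)) (whiskR D (FC ?G \<phi>) (mm ?X))"
        using HCH[OF hp hf] HCH[OF hq hg] by simp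
      also have "\<dots> = whiskR D (VComp D (FC ?G \<psi>) (FC ?G \<phi>)) (mm ?X)" by (rule D.wR_vcomp[OF Gp Gq mX', symmetric])
      also have "\<dots> = whiskR D (FC ?G (VComp C \<psi> \<phi>)) (mm ?X)" using fV[OF FG(2) p q pq] by simp
      finally show "whiskL D (mm (Cod C (Src C (VComp C \<psi> \<phi>)))) (VComp D (HC \<psi>) (HC \<phi>)) =
          whiskR D (FC ?G (VComp C \<psi> \<phi>)) (mm (Dom C (Src C (VComp C \<psi> \<phi>))))" using hv by (simp add: hom2_def)
    qed
    then show ?thesis using HCU[of "VComp C \<psi> \<phi>"] hv by (simp add: Hf_def hom2_def)
  qed
  show "FC Hf (HComp C \<psi> \<phi>) = HComp D (FC Hf \<psi>) (FC Hf \<phi>)"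
    if p: "\<phi> \<in> Cell C" and q: "\<psi> \<in> Cell C" and pq: "Cod C (Src C \<phi>) = Dom C (Src C \<psi>)" for \<phi> \<psi>
  proof -
    let ?f = "Src C \<phi>" and ?f' = "Tgt C \<phi>" and ?g = "Src C \<psi>" and ?g' = "Tgt C \<psi>"
    let ?X = "Dom C ?f" and ?Y = "Cod C ?f" and ?Z = "Cod C ?g"
    have hp: "hom2 C \<phi> ?f ?f'" and hf: "hom1 C ?f ?X ?Y" and hf': "hom1 C ?f' ?X ?Y" using Ccell[OF p] by auto
    have hq: "hom2 C \<psi> ?g ?g'" and hg: "hom1 C ?g ?Y ?Z" and hg': "hom1 C ?g' ?Y ?Z" using Ccell[OF q] pq by auto
    have hH: "hom2 C (HComp C \<psi> \<phi>) (Comp C ?g ?f) (Comp C ?g' ?f')" by (rule C.hcomp_hom[OF hp hq pq])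
    have hgf: "hom1 C (Comp C ?g ?f) ?X ?Z" by (rule C.comp_hom[OF hf hg])
    have X: "?X \<in> Obj C" and Y: "?Y \<in> Obj C" and Z: "?Z \<in> Obj C" using hom1_obj[OF hf] hom1_obj[OF hg] by auto
    have Pp: "hom2 D (HC \<phi>) (HA ?f) (HA ?f')" and Pq: "hom2 D (HC \<psi>) (HA ?g) (HA ?g')"
      using HCH[OF hp hf] HCH[OF hq hg] by auto
    have Hf': "hom1 D (HA ?f) (HO ?X) (HO ?Y)" using HAH hf by auto
    have Hg': "hom1 D (HA ?g) (HO ?Y) (HO ?Z)" using HAH hg by auto
    have Ff: "hom1 D (FA ?F ?f) (FO ?F ?X) (FO ?F ?Y)" by (rule fA'[OF FG(1) hf])
    have Fg: "hom1 D (FA ?F ?g) (FO ?F ?Y) (FO ?F ?Z)" by (rule fA'[OF FG(1) hg])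
    have Gf: "hom1 D (FA ?G ?f) (FO ?G ?X) (FO ?G ?Y)" by (rule fA'[OF FG(2) hf])
    have Gg: "hom1 D (FA ?G ?g) (FO ?G ?Y) (FO ?G ?Z)" by (rule fA'[OF FG(2) hg])
    have Fp: "hom2 D (FC ?F \<phi>) (FA ?F ?f) (FA ?F ?f')" by (rule fC'[OF FG(1) hp])
    have Fq: "hom2 D (FC ?F \<psi>) (FA ?F ?g) (FA ?F ?g')" by (rule fC'[OF FG(1) hq])
    have Gp: "hom2 D (FC ?G \<phi>) (FA ?G ?f) (FA ?G ?f')" by (rule fC'[OF FG(2) hp])
    have Gq: "hom2 D (FC ?G \<psi>) (FA ?G ?g) (FA ?G ?g')" by (rule fC'[OF FG(2) hq])
    note eX = emH(1)[OF X] and eY = emH(1)[OF Y] and eZ = emH(1)[OF Z]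
    note mX = emH(2)[OF X] and mY = emH(2)[OF Y] and mZ = emH(2)[OF Z]
    have IeX: "hom2 D (Id2 D (ee ?X)) (ee ?X) (ee ?X)" using D.id2_hom D.hom1_arr[OF eX] by blast
    have IeY: "hom2 D (Id2 D (ee ?Y)) (ee ?Y) (ee ?Y)" using D.id2_hom D.hom1_arr[OF eY] by blast
    have IeZ: "hom2 D (Id2 D (ee ?Z)) (ee ?Z) (ee ?Z)" using D.id2_hom D.hom1_arr[OF eZ] by blast
    have ImX: "hom2 D (Id2 D (mm ?X)) (mm ?X) (mm ?X)" using D.id2_hom D.hom1_arr[OF mX] by blast
    have ImY: "hom2 D (Id2 D (mm ?Y)) (mm ?Y) (mm ?Y)" using D.id2_hom D.hom1_arr[OF mY] by blast
    have ImZ: "hom2 D (Id2 D (mm ?Z)) (mm ?Z) (mm ?Z)" using D.id2_hom D.hom1_arr[OF mZ] by blast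
    have dc: "Cod D (ee ?X) = Dom D (HA ?f)" "Cod D (HA ?f) = Dom D (HA ?g)" "Cod D (ee ?Y) = Dom D (HA ?g)"
      "Cod D (FA ?F ?f) = Dom D (ee ?Y)" "Cod D (FA ?F ?f) = Dom D (FA ?F ?g)" "Cod D (FA ?F ?g) = Dom D (ee ?Z)"
      "Cod D (HA ?f) = Dom D (mm ?Y)" "Cod D (HA ?g) = Dom D (mm ?Z)" "Cod D (mm ?Y) = Dom D (FA ?G ?g)"
      "Cod D (mm ?X) = Dom D (FA ?G ?f)" "Cod D (FA ?G ?f) = Dom D (FA ?G ?g)"
      using eX eY eZ mX mY mZ Hf' Hg' Ff Fg Gf Gg by (simp_all add: hom1_def)
    have "Qb (HComp C \<psi> \<phi>) (HComp D (HC \<psi>) (HC \<phi>))" unfolding Qb_def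
    proof (intro conjI)
      show "hom2 D (HComp D (HC \<psi>) (HC \<phi>)) (HA (Src C (HComp C \<psi> \<phi>))) (HA (Tgt C (HComp C \<psi> \<phi>)))"
      proof -
        have "HA (Comp C ?g ?f) = Comp D (HA ?g) (HA ?f)" "HA (Comp C ?g' ?f') = Comp D (HA ?g') (HA ?f')"
          using \<open>\<And>f g. f \<in> Arr C \<Longrightarrow> g \<in> Arr C \<Longrightarrow> Cod C f = Dom C g \<Longrightarrow> FA Hf (Comp C g f) = Comp D (FA Hf g) (FA Hf f)\<close>
            hf hg hf' hg' by (auto simp: Hf_def hom1_def)
        then show ?thesis using D.hcomp_hom[OF Pp Pq dc(2)] hH by (simp add: hom2_def)
      qed
      have "whiskR D (HComp D (HC \<psi>) (HC \<phi>)) (ee ?X) = HComp D (HComp D (HC \<psi>) (HC \<phi>)) (Id2 D (ee ?X))"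
        by (simp add: whiskR_def)
      also have "\<dots> = HComp D (HC \<psi>) (HComp D (HC \<phi>) (Id2 D (ee ?X)))" by (rule D.hassoc[OF IeX Pp Pq dc(1) dc(2), symmetric])
      also have "\<dots> = HComp D (HC \<psi>) (whiskL D (ee ?Y) (FC ?F \<phi>))" using HCH[OF hp hf] by (simp add: whiskR_def)
      also have "\<dots> = HComp D (HComp D (HC \<psi>) (Id2 D (ee ?Y))) (FC ?F \<phi>)"
        unfolding whiskL_def by (rule D.hassoc[OF Fp IeY Pq dc(4) dc(3)])
      also have "\<dots> = HComp D (whiskL D (ee ?Z) (FC ?F \<psi>)) (FC ?F \<phi>)" using HCH[OF hq hg] by (simp add: whiskR_def)
      also have "\<dots> = HComp D (Id2 D (ee ?Z)) (HComp D (FC ?F \<psi>) (FC ?F \<phi>))"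
        unfolding whiskL_def by (rule D.hassoc[OF Fp Fq IeZ dc(5) dc(6), symmetric])
      also have "\<dots> = whiskL D (ee ?Z) (FC ?F (HComp C \<psi> \<phi>))" using fH[OF FG(1) p q pq] by (simp add: whiskL_def)
      finally show "whiskR D (HComp D (HC \<psi>) (HC \<phi>)) (ee (Dom C (Src C (HComp C \<psi> \<phi>)))) =
          whiskL D (ee (Cod C (Src C (HComp C \<psi> \<phi>)))) (FC ?F (HComp C \<psi> \<phi>))"
        using hH hgf by (simp add: hom2_def hom1_def)
      have "whiskL D (mm ?Z) (HComp D (HC \<psi>) (HC \<phi>)) = HComp D (Id2 D (mm ?Z)) (HComp D (HC \<psi>) (HC \<phi>))"
        by (simp add: whiskL_def)
      also have "\<dots> = HComp D (HComp D (Id2 D (mm ?Z)) (HC \<psi>)) (HC \<phi>)" by (rule D.hassoc[OF Pp Pq ImZ dc(2) dc(8)])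
      also have "\<dots> = HComp D (whiskR D (FC ?G \<psi>) (mm ?Y)) (HC \<phi>)" using HCH[OF hq hg] by (simp add: whiskL_def)
      also have "\<dots> = HComp D (FC ?G \<psi>) (HComp D (Id2 D (mm ?Y)) (HC \<phi>))"
        unfolding whiskR_def by (rule D.hassoc[OF Pp ImY Gq dc(7) dc(9), symmetric])
      also have "\<dots> = HComp D (FC ?G \<psi>) (whiskR D (FC ?G \<phi>) (mm ?X))" using HCH[OF hp hf] by (simp add: whiskL_def)
      also have "\<dots> = HComp D (HComp D (FC ?G \<psi>) (FC ?G \<phi>)) (Id2 D (mm ?X))"
        unfolding whiskR_def by (rule D.hassoc[OF ImX Gp Gq dc(10) dc(11)])
      also have "\<dots> = whiskR D (FC ?G (HComp C \<psi> \<phi>)) (mm ?X)" using fH[OF FG(2) p q pq] by (simp add: whiskR_def)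
      finally show "whiskL D (mm (Cod C (Src C (HComp C \<psi> \<phi>)))) (HComp D (HC \<psi>) (HC \<phi>)) =
          whiskR D (FC ?G (HComp C \<psi> \<phi>)) (mm (Dom C (Src C (HComp C \<psi> \<phi>))))"
        using hH hgf by (simp add: hom2_def hom1_def)
    qed
    then show ?thesis using HCU[of "HComp C \<psi> \<phi>"] hH by (simp add: Hf_def hom2_def)
  qed
qed


definition "en = \<lparr> NSrc = NSrc \<alpha>, NTgt = Hf, NCmp = (\<lambda>X. if X \<in> Obj C then ee X else undefined) \<rparr>"
definition "mn = \<lparr> NSrc = Hf, NTgt = NTgt \<alpha>, NCmp = (\<lambda>X. if X \<in> Obj C then mm X else undefined) \<rparr>"

lemma en_nat: "two_nat C D en"
  unfolding two_nat_def
proof (intro conjI ballI allI impI)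
  show "two_functor C D (NSrc en)" "two_functor C D (NTgt en)" using FG H_fun by (simp_all add: en_def)
  show "NCmp en X = undefined" if "X \<notin> Obj C" for X using that by (simp add: en_def)
  show "hom1 D (NCmp en X) (FO (NSrc en) X) (FO (NTgt en) X)" if "X \<in> Obj C" for X
    using emH(1)[OF that] that by (simp add: en_def Hf_def)
  show "Comp D (FA (NTgt en) f) (NCmp en (Dom C f)) = Comp D (NCmp en (Cod C f)) (FA (NSrc en) f)"
    if f: "f \<in> Arr C" for f
    using HAe[of f "Dom C f" "Cod C f"] f Cobj[OF f] by (simp add: en_def Hf_def hom1_def)
  show "whiskL D (NCmp en (Cod C (Src C \<phi>))) (FC (NSrc en) \<phi>) = whiskR D (FC (NTgt en) \<phi>) (NCmp en (Dom C (Src C \<phi>)))"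
    if p: "\<phi> \<in> Cell C" for \<phi>
    using HCH[of \<phi> "Src C \<phi>" "Tgt C \<phi>" "Dom C (Src C \<phi>)" "Cod C (Src C \<phi>)"] Ccell[OF p] hom1_obj[OF conjunct1[OF conjunct2[OF Ccell[OF p]]]]
    by (simp add: en_def Hf_def)
qed

lemma mn_nat: "two_nat C D mn"
  unfolding two_nat_def
proof (intro conjI ballI allI impI)
  show "two_functor C D (NSrc mn)" "two_functor C D (NTgt mn)" using FG H_fun by (simp_all add: mn_def)
  show "NCmp mn X = undefined" if "X \<notin> Obj C" for X using that by (simp add: mn_def)
  show "hom1 D (NCmp mn X) (FO (NSrc mn) X) (FO (NTgt mn) X)" if "X \<in> Obj C" for X
    using emH(2)[OF that] that by (simp add: mn_def Hf_def)
  show "Comp D (FA (NTgt mn) f) (NCmp mn (Dom C f)) = Comp D (NCmp mn (Cod C f)) (FA (NSrc mn) f)"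
    if f: "f \<in> Arr C" for f
    using HAm[of f "Dom C f" "Cod C f"] f Cobj[OF f] by (simp add: mn_def Hf_def hom1_def)
  show "whiskL D (NCmp mn (Cod C (Src C \<phi>))) (FC (NSrc mn) \<phi>) = whiskR D (FC (NTgt mn) \<phi>) (NCmp mn (Dom C (Src C \<phi>)))"
    if p: "\<phi> \<in> Cell C" for \<phi>
    using HCH[of \<phi> "Src C \<phi>" "Tgt C \<phi>" "Dom C (Src C \<phi>)" "Cod C (Src C \<phi>)"] Ccell[OF p] hom1_obj[OF conjunct1[OF conjunct2[OF Ccell[OF p]]]]
    by (simp add: mn_def Hf_def)
qed

lemma main_i: "\<exists>\<epsilon>\<in>pointwise_class C D E. \<exists>\<mu>\<in>pointwise_class C D M. NTgt \<epsilon> = NSrc \<mu> \<and> \<alpha> = nat_comp C D \<mu> \<epsilon>"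
proof (intro bexI conjI)
  show "en \<in> pointwise_class C D E" using en_nat emP(1) by (simp add: pointwise_class_def en_def)
  show "mn \<in> pointwise_class C D M" using mn_nat emP(2) by (simp add: pointwise_class_def mn_def)
  show "NTgt en = NSrc mn" by (simp add: en_def mn_def)
  show "\<alpha> = nat_comp C D mn en"
    by (rule nat_eqI[OF N nat_comp_nat[OF mn_nat en_nat]]) (use emP(4) in \<open>simp_all add: en_def mn_def\<close>)
qed

end
end



lemma (in P28) main: "enhanced_fs DC (pointwise_class C D E) (pointwise_class C D M)"
  unfolding enhanced_fs_def Let_def DC_simps
proof (intro conjI ballI allI impI subsetI)
  show "x \<in> {\<eta>. two_nat C D \<eta>}" if "x \<in> pointwise_class C D E" for x using pwD(1)[OF that] by simp
  show "x \<in> {\<eta>. two_nat C D \<eta>}" if "x \<in> pointwise_class C D M" for x using pwD(1)[OF that] by simp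
  show "x \<in> pointwise_class C D E" if "x \<in> {f. iso1 DC f}" for x
    using that iso1_DC_D iso_E unfolding pointwise_class_def iso1_def by auto
  show "x \<in> pointwise_class C D M" if "x \<in> {f. iso1 DC f}" for x
    using that iso1_DC_D iso_M unfolding pointwise_class_def iso1_def by auto
  show "\<exists>\<epsilon>\<in>pointwise_class C D E. \<exists>\<mu>\<in>pointwise_class C D M. NTgt \<epsilon> = NSrc \<mu> \<and> \<alpha> = nat_comp C D \<mu> \<epsilon>"
    if "\<alpha> \<in> {\<eta>. two_nat C D \<eta>}" for \<alpha> using main_i that by simp
next
  fix \<epsilon> \<mu> \<alpha> \<alpha>' \<Psi>
  assume "\<epsilon> \<in> pointwise_class C D E" "\<mu> \<in> pointwise_class C D M"
    "hom1 DC \<alpha> (NSrc \<epsilon>) (NSrc \<mu>)" "hom1 DC \<alpha>' (NTgt \<epsilon>) (NTgt \<mu>)"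
    "hom2 DC \<Psi> (nat_comp C D \<alpha>' \<epsilon>) (nat_comp C D \<mu> \<alpha>)" "iso2 DC \<Psi>"
  note m = main_ii[OF this]
  show "\<exists>!(\<delta>, \<Psi>'). hom1 DC \<delta> (NTgt \<epsilon>) (NSrc \<mu>) \<and> hom2 DC \<Psi>' \<alpha>' (nat_comp C D \<mu> \<delta>) \<and> iso2 DC \<Psi>' \<and>
            nat_comp C D \<delta> \<epsilon> = \<alpha> \<and> whiskR DC \<Psi>' \<epsilon> = \<Psi>" using m by blast
  fix \<delta> \<Psi>'
  assume "hom1 DC \<delta> (NTgt \<epsilon>) (NSrc \<mu>) \<and> hom2 DC \<Psi>' \<alpha>' (nat_comp C D \<mu> \<delta>) \<and> iso2 DC \<Psi>' \<and>
            nat_comp C D \<delta> \<epsilon> = \<alpha> \<and> whiskR DC \<Psi>' \<epsilon> = \<Psi>" "\<Psi> = Id2 DC (nat_comp C D \<alpha>' \<epsilon>)"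
  then show "nat_comp C D \<mu> \<delta> = \<alpha>'" "\<Psi>' = Id2 DC \<alpha>'" using m by blast+
next
  fix \<epsilon> \<mu> \<alpha>1 \<alpha>2 \<alpha>1' \<alpha>2' \<Phi> \<Phi>' \<delta>1 \<delta>2
  assume "\<epsilon> \<in> pointwise_class C D E" "\<mu> \<in> pointwise_class C D M"
    "hom1 DC \<alpha>1 (NSrc \<epsilon>) (NSrc \<mu>)" "hom1 DC \<alpha>2 (NSrc \<epsilon>) (NSrc \<mu>)"
    "hom1 DC \<alpha>1' (NTgt \<epsilon>) (NTgt \<mu>)" "hom1 DC \<alpha>2' (NTgt \<epsilon>) (NTgt \<mu>)"
    "nat_comp C D \<alpha>1' \<epsilon> = nat_comp C D \<mu> \<alpha>1" "nat_comp C D \<alpha>2' \<epsilon> = nat_comp C D \<mu> \<alpha>2"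
    "hom2 DC \<Phi> \<alpha>1 \<alpha>2" "hom2 DC \<Phi>' \<alpha>1' \<alpha>2'" "whiskL DC \<mu> \<Phi> = whiskR DC \<Phi>' \<epsilon>"
    "hom1 DC \<delta>1 (NTgt \<epsilon>) (NSrc \<mu>)" "nat_comp C D \<delta>1 \<epsilon> = \<alpha>1" "nat_comp C D \<mu> \<delta>1 = \<alpha>1'"
    "hom1 DC \<delta>2 (NTgt \<epsilon>) (NSrc \<mu>)" "nat_comp C D \<delta>2 \<epsilon> = \<alpha>2" "nat_comp C D \<mu> \<delta>2 = \<alpha>2'"
  then show "\<exists>!\<Delta>. hom2 DC \<Delta> \<delta>1 \<delta>2 \<and> whiskR DC \<Delta> \<epsilon> = \<Phi> \<and> whiskL DC \<mu> \<Delta> = \<Phi>'"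
    by (rule main_iii)
qed

theorem proposition2p8:
  fixes C :: "('o1,'a1,'c1) twocat" and D :: "('o2,'a2,'c2) twocat"
    and E M :: "'a2 set"
  assumes "two_category C" and "two_category D"
    and "enhanced_fs D E M"
    and "separates_parallel_pairs D E M"
    and "\<forall>\<epsilon>\<in>E. two_epi D \<epsilon>"
    and "\<forall>\<mu>\<in>M. two_mono D \<mu>"
  shows "enhanced_fs (functor_cat C D) (pointwise_class C D E) (pointwise_class C D M)"
proof -
  interpret P28 C D E M
    by (intro P28.intro tc.intro P28_axioms.intro) (use assms in auto)
  show ?thesis by (rule main)
qed



end
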